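(* There exists $\eta > 0$ such that for every Coxeter polygon $P$ in $\mathbb H^2$: (1) if an edge of $P$ has length $\le \eta$, then both angles of $P$ at the endpoints of that edge are right angles; (2) no two adjacent edges of $P$ both have length $\le \eta$; (3) any two non-consecutive vertices of $P$ are at distance at least $\eta$.
   Context: A Coxeter polygon is a finite-area region of $\mathbb H^2$ bounded by finitely many geodesics such that each angle between adjacent sides is of the form $\pi/m$ for an integer $m \ge 2$. *)

theory Defs
  imports Complex_Main
begin

text \<open>Hyperboloid model of the hyperbolic plane H^2:
  points x in R^3 with <x,x> = -1 and x3 > 0, where <.,.> is the Lorentzian form.\<close>

type_synonym pt = "real \<times> real \<times> real"

definition lor :: "pt \<Rightarrow> pt \<Rightarrow> real" where
  "lor x y = fst x * fst y + fst (snd x) * fst (snd y) - snd (snd x) * snd (snd y)"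

definition hyp_point :: "pt \<Rightarrow> bool" where
  "hyp_point x \<longleftrightarrow> lor x x = -1 \<and> snd (snd x) > 0"

definition hdist :: "pt \<Rightarrow> pt \<Rightarrow> real" where
  "hdist x y = arcosh (- lor x y)"

definition padd :: "pt \<Rightarrow> pt \<Rightarrow> pt" where
  "padd x y = (fst x + fst y, fst (snd x) + fst (snd y), snd (snd x) + snd (snd y))"

definition pscale :: "real \<Rightarrow> pt \<Rightarrow> pt" where
  "pscale c x = (c * fst x, c * fst (snd x), c * snd (snd x))"

text \<open>Initial tangent vector at v of the geodesic segment from v to a
  (orthogonal projection of a onto the tangent space at v, up to positive scaling).\<close>
definition tproj :: "pt \<Rightarrow> pt \<Rightarrow> pt" where
  "tproj v a = padd a (pscale (lor a v) v)"

definition hangle :: "pt \<Rightarrow> pt \<Rightarrow> pt \<Rightarrow> real" where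
  "hangle v a b = arccos (lor (tproj v a) (tproj v b) /
      sqrt (lor (tproj v a) (tproj v a) * lor (tproj v b) (tproj v b)))"

text \<open>Euclidean determinant in R^3; the sign of det3 p q x decides on which side of the
  geodesic through p and q (= hyperboloid \<inter> span{p,q}) the point x lies.\<close>
definition det3 :: "pt \<Rightarrow> pt \<Rightarrow> pt \<Rightarrow> real" where
  "det3 a b c =
     fst a * (fst (snd b) * snd (snd c) - snd (snd b) * fst (snd c))
   - fst (snd a) * (fst b * snd (snd c) - snd (snd b) * fst c)
   + snd (snd a) * (fst b * fst (snd c) - fst (snd b) * fst c)"

definition nxt :: "nat \<Rightarrow> nat \<Rightarrow> nat" where
  "nxt n i = (i + 1) mod n"

definition prv :: "nat \<Rightarrow> nat \<Rightarrow> nat" where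
  "prv n i = (i + n - 1) mod n"

text \<open>A compact convex polygon in H^2, given by its vertex list in cyclic (positive) order:
  at least 3 vertices, all in H^2, and for every edge all other vertices lie strictly on
  the same (left) side of the geodesic spanned by that edge.\<close>
definition convex_hpolygon :: "pt list \<Rightarrow> bool" where
  "convex_hpolygon vs \<longleftrightarrow> length vs \<ge> 3 \<and> (\<forall>v\<in>set vs. hyp_point v) \<and>
     (\<forall>i<length vs. \<forall>j<length vs. j \<noteq> i \<and> j \<noteq> nxt (length vs) i \<longrightarrow>
        det3 (vs ! i) (vs ! nxt (length vs) i) (vs ! j) > 0)"

definition vangle :: "pt list \<Rightarrow> nat \<Rightarrow> real" where
  "vangle vs i = hangle (vs ! i) (vs ! prv (length vs) i) (vs ! nxt (length vs) i)"

definition elen :: "pt list \<Rightarrow> nat \<Rightarrow> real" where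
  "elen vs i = hdist (vs ! i) (vs ! nxt (length vs) i)"

definition coxeter_polygon :: "pt list \<Rightarrow> bool" where
  "coxeter_polygon vs \<longleftrightarrow> convex_hpolygon vs \<and>
     (\<forall>i<length vs. \<exists>m::nat. m \<ge> 2 \<and> vangle vs i = pi / real m)"

end

theory Submission
  imports Defs
begin


lemma det3_gram:
  "det3 v a b * det3 v' a' b' = - (lor v v' * (lor a a' * lor b b' - lor a b' * lor b a')
     - lor v a' * (lor a v' * lor b b' - lor a b' * lor b v')
     + lor v b' * (lor a v' * lor b a' - lor a a' * lor b v'))"
  unfolding det3_def lor_def by algebra

lemma lor_sym: "lor x y = lor y x"
  unfolding lor_def by (simp add: mult.commute)

lemma det3_cyc: "det3 a b c = det3 b c a"
  unfolding det3_def by algebra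

lemma det3_swap: "det3 a b c = - det3 a c b"
  unfolding det3_def by algebra

lemma hyp_lor:
  assumes "hyp_point x" "hyp_point y" shows "lor x y \<le> -1"
proof -
  obtain x1 x2 x3 where x: "x = (x1,x2,x3)" by (cases x) auto
  obtain y1 y2 y3 where y: "y = (y1,y2,y3)" by (cases y) auto
  have hx: "x3^2 = 1 + x1^2 + x2^2" "x3 > 0" using assms(1) unfolding x hyp_point_def lor_def
    by (auto simp: power2_eq_square)
  have hy: "y3^2 = 1 + y1^2 + y2^2" "y3 > 0" using assms(2) unfolding y hyp_point_def lor_def
    by (auto simp: power2_eq_square)
  have "(x3*y3)^2 \<ge> (1 + x1*y1 + x2*y2)^2"
  proof -
    have "(x3*y3)^2 = (1 + x1^2 + x2^2) * (1 + y1^2 + y2^2)" using hx hy by (simp add: power_mult_distrib)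
    also have "\<dots> \<ge> (1 + x1*y1 + x2*y2)^2"
    proof -
      have "(1 + x1^2 + x2^2) * (1 + y1^2 + y2^2) - (1 + x1*y1 + x2*y2)^2 = (x1 - y1)^2 + (x2 - y2)^2 + (x1*y2 - x2*y1)^2"
        by algebra
      moreover have "(x1 - y1)^2 + (x2 - y2)^2 + (x1*y2 - x2*y1)^2 \<ge> 0" by simp
      ultimately show ?thesis by linarith
    qed
    finally show ?thesis .
  qed
  hence "x3*y3 \<ge> 1 + x1*y1 + x2*y2"
    using hx(2) hy(2) by (smt (verit) mult_pos_pos power2_le_imp_le)
  thus ?thesis unfolding x y lor_def by simp
qed

lemma tproj_lor:
  assumes "lor v v = -1"
  shows "lor (tproj v a) (tproj v b) = lor a v * lor b v + lor a b"
proof -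
  obtain v1 v2 v3 where v: "v = (v1,v2,v3)" by (cases v) auto
  obtain a1 a2 a3 where a: "a = (a1,a2,a3)" by (cases a) auto
  obtain b1 b2 b3 where b: "b = (b1,b2,b3)" by (cases b) auto
  have h: "v1*v1 + v2*v2 - v3*v3 = -1" using assms unfolding v lor_def by simp
  show ?thesis unfolding v a b tproj_def padd_def pscale_def lor_def
    using h by simp algebra
qed

lemma det3_sq:
  assumes "lor v v = -1" "lor a a = -1" "lor b b = -1"
  shows "(det3 v a b)^2 = ((lor a v)^2 - 1) * ((lor b v)^2 - 1) - (lor a v * lor b v + lor a b)^2"
proof -
  have "(det3 v a b)^2 = det3 v a b * det3 v a b" by (simp add: power2_eq_square)
  also note det3_gram[of v a b v a b]
  finally show ?thesis using assms by (simp add: lor_sym[of v a] lor_sym[of v b] lor_sym[of b a] power2_eq_square algebra_simps)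
qed

definition Pv :: "pt \<Rightarrow> pt \<Rightarrow> real" where "Pv v a = (lor a v)^2 - 1"
definition Nv :: "pt \<Rightarrow> pt \<Rightarrow> pt \<Rightarrow> real" where "Nv v a b = lor a v * lor b v + lor a b"

lemma hyp_self: "hyp_point x \<Longrightarrow> lor x x = -1" unfolding hyp_point_def by simp

lemma Pv_nonneg: "hyp_point v \<Longrightarrow> hyp_point a \<Longrightarrow> Pv v a \<ge> 0"
proof -
  assume "hyp_point v" "hyp_point a"
  hence "lor a v \<le> -1" by (rule hyp_lor[rotated])
  hence "1 \<le> (- lor a v)^2" by (intro one_le_power) simp
  hence "(lor a v)^2 \<ge> 1" by simp
  thus ?thesis unfolding Pv_def by simp
qed

lemma det3_sq':
  assumes "hyp_point v" "hyp_point a" "hyp_point b"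
  shows "(det3 v a b)^2 = Pv v a * Pv v b - (Nv v a b)^2"
  using det3_sq[OF hyp_self[OF assms(1)] hyp_self[OF assms(2)] hyp_self[OF assms(3)]]
  unfolding Pv_def Nv_def .

lemma hangle_formula:
  assumes "hyp_point v" "hyp_point a" "hyp_point b"
  shows "hangle v a b = arccos (Nv v a b / (sqrt (Pv v a) * sqrt (Pv v b)))"
proof -
  have v: "lor v v = -1" using assms(1) by (rule hyp_self)
  have "lor (tproj v a) (tproj v a) = Pv v a"
    using tproj_lor[OF v, of a a] hyp_self[OF assms(2)] unfolding Pv_def by (simp add: power2_eq_square)
  moreover have "lor (tproj v b) (tproj v b) = Pv v b"
    using tproj_lor[OF v, of b b] hyp_self[OF assms(3)] unfolding Pv_def by (simp add: power2_eq_square)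
  moreover have "lor (tproj v a) (tproj v b) = Nv v a b"
    using tproj_lor[OF v, of a b] unfolding Nv_def by simp
  ultimately show ?thesis unfolding hangle_def by (simp add: real_sqrt_mult)
qed

lemma hangle_sym:
  assumes "hyp_point v" "hyp_point a" "hyp_point b"
  shows "hangle v a b = hangle v b a"
  using hangle_formula[OF assms] hangle_formula[OF assms(1,3,2)]
  unfolding Nv_def by (simp add: lor_sym[of a b] mult.commute)

lemma angle_facts:
  assumes "hyp_point v" "hyp_point a" "hyp_point b" "det3 v a b \<noteq> 0"
  shows "Pv v a > 0" "Pv v b > 0"
    "cos (hangle v a b) = Nv v a b / (sqrt (Pv v a) * sqrt (Pv v b))"
    "sin (hangle v a b) = \<bar>det3 v a b\<bar> / (sqrt (Pv v a) * sqrt (Pv v b))"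
    "0 < hangle v a b" "hangle v a b < pi"
proof -
  have sq: "(det3 v a b)^2 = Pv v a * Pv v b - (Nv v a b)^2" by (rule det3_sq'[OF assms(1-3)])
  have pa: "Pv v a \<ge> 0" and pb: "Pv v b \<ge> 0" using Pv_nonneg assms by auto
  have d: "(det3 v a b)^2 > 0" using assms(4) by simp
  have prod: "Pv v a * Pv v b > (Nv v a b)^2" using sq d by linarith
  have "(Nv v a b)^2 \<ge> 0" by simp
  hence prodpos: "Pv v a * Pv v b > 0" using prod by linarith
  have "Pv v a \<noteq> 0" using prodpos by auto
  thus A: "Pv v a > 0" using pa by simp
  have "Pv v b \<noteq> 0" using prodpos by auto
  thus B: "Pv v b > 0" using pb by simp
  define q where "q = Nv v a b / (sqrt (Pv v a) * sqrt (Pv v b))"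
  have den: "sqrt (Pv v a) * sqrt (Pv v b) > 0" using A B by simp
  have densq: "(sqrt (Pv v a) * sqrt (Pv v b))^2 = Pv v a * Pv v b"
    using A B by (simp add: power_mult_distrib)
  have q2: "q^2 = (Nv v a b)^2 / (Pv v a * Pv v b)"
    unfolding q_def by (simp add: power_divide densq)
  have q2lt: "q^2 < 1" using prod prodpos unfolding q2 by simp
  hence "\<bar>q\<bar> < 1" by (simp add: abs_square_less_1)
  hence qb: "-1 < q" "q < 1" by auto
  have hq: "hangle v a b = arccos q" unfolding q_def by (rule hangle_formula[OF assms(1-3)])
  show "cos (hangle v a b) = Nv v a b / (sqrt (Pv v a) * sqrt (Pv v b))"
    using qb hq q_def by simp
  have "1 - q^2 = (Pv v a * Pv v b - (Nv v a b)^2) / (Pv v a * Pv v b)"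
    unfolding q2 using A B by (simp add: diff_divide_distrib)
  hence "1 - q^2 = (det3 v a b)^2 / (Pv v a * Pv v b)" using sq by simp
  hence "sqrt (1 - q^2) = \<bar>det3 v a b\<bar> / (sqrt (Pv v a) * sqrt (Pv v b))"
    by (simp add: real_sqrt_divide real_sqrt_mult)
  thus "sin (hangle v a b) = \<bar>det3 v a b\<bar> / (sqrt (Pv v a) * sqrt (Pv v b))"
    using hq qb sin_arccos by simp
  show "0 < hangle v a b" "hangle v a b < pi" using arccos_lt_bounded[OF qb] hq by auto
qed

lemma ident_I2:
  assumes "lor v v = -1" "lor x x = -1"
  shows "det3 v a x * Nv v x b + Nv v a x * det3 v x b = Pv v x * det3 v a b"
proof -
  obtain v1 v2 v3 where v: "v = (v1,v2,v3)" by (cases v) auto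
  obtain a1 a2 a3 where a: "a = (a1,a2,a3)" by (cases a) auto
  obtain b1 b2 b3 where b: "b = (b1,b2,b3)" by (cases b) auto
  obtain x1 x2 x3 where x: "x = (x1,x2,x3)" by (cases x) auto
  have h1: "v1*v1 + v2*v2 - v3*v3 = -1" using assms unfolding v lor_def by simp
  have h2: "x1*x1 + x2*x2 - x3*x3 = -1" using assms unfolding x lor_def by simp
  show ?thesis unfolding v a b x Nv_def Pv_def det3_def lor_def
    using h1 h2 by simp algebra
qed

lemma ident_I1:
  assumes "lor v v = -1" "lor x x = -1"
  shows "Nv v a x * Nv v x b - det3 v a x * det3 v x b = Pv v x * Nv v a b"
proof -
  obtain v1 v2 v3 where v: "v = (v1,v2,v3)" by (cases v) auto
  obtain a1 a2 a3 where a: "a = (a1,a2,a3)" by (cases a) auto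
  obtain b1 b2 b3 where b: "b = (b1,b2,b3)" by (cases b) auto
  obtain x1 x2 x3 where x: "x = (x1,x2,x3)" by (cases x) auto
  have h1: "v1*v1 + v2*v2 - v3*v3 = -1" using assms unfolding v lor_def by simp
  have h2: "x1*x1 + x2*x2 - x3*x3 = -1" using assms unfolding x lor_def by simp
  show ?thesis unfolding v a b x Nv_def Pv_def det3_def lor_def
    using h1 h2 by simp algebra
qed

lemma angle_add:
  assumes hv: "hyp_point v" and ha: "hyp_point a" and hx: "hyp_point x" and hb: "hyp_point b"
    and d1: "det3 v a x > 0" and d2: "det3 v x b > 0" and d3: "det3 v a b > 0"
  shows "hangle v a b = hangle v a x + hangle v x b"
proof -
  note f1 = angle_facts[OF hv ha hx, simplified, OF d1[THEN less_imp_neq, symmetric]]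
  note f2 = angle_facts[OF hv hx hb, simplified, OF d2[THEN less_imp_neq, symmetric]]
  note f3 = angle_facts[OF hv ha hb, simplified, OF d3[THEN less_imp_neq, symmetric]]
  define sa where "sa = sqrt (Pv v a)"
  define sx where "sx = sqrt (Pv v x)"
  define sb where "sb = sqrt (Pv v b)"
  have sa: "sa > 0" using f1 unfolding sa_def by simp
  have sx: "sx > 0" using f1 unfolding sx_def by simp
  have sb: "sb > 0" using f2 unfolding sb_def by simp
  have sxx: "sx * sx = Pv v x" unfolding sx_def using f1 by simp
  define t1 where "t1 = hangle v a x"
  define t2 where "t2 = hangle v x b"
  have c1: "cos t1 = Nv v a x / (sa * sx)" "sin t1 = det3 v a x / (sa * sx)"
    using f1 d1 unfolding t1_def sa_def sx_def by auto
  have c2: "cos t2 = Nv v x b / (sx * sb)" "sin t2 = det3 v x b / (sx * sb)"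
    using f2 d2 unfolding t2_def sb_def sx_def by auto
  have c3: "hangle v a b = arccos (Nv v a b / (sa * sb))"
    using hangle_formula[OF hv ha hb] unfolding sa_def sb_def .
  have I1: "Nv v a x * Nv v x b - det3 v a x * det3 v x b = Pv v x * Nv v a b"
    by (rule ident_I1[OF hyp_self[OF hv] hyp_self[OF hx]])
  have I2: "det3 v a x * Nv v x b + Nv v a x * det3 v x b = Pv v x * det3 v a b"
    by (rule ident_I2[OF hyp_self[OF hv] hyp_self[OF hx]])
  have "cos (t1 + t2) = (Nv v a x * Nv v x b - det3 v a x * det3 v x b) / (sa * (sx * sx) * sb)"
    unfolding cos_add c1 c2 using sa sx sb by (simp add: field_simps)
  also have "\<dots> = Nv v a b / (sa * sb)" unfolding I1 sxx[symmetric] using sa sx sb by (simp add: field_simps)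
  finally have cs: "cos (t1 + t2) = Nv v a b / (sa * sb)" .
  have "sin (t1 + t2) = (det3 v a x * Nv v x b + Nv v a x * det3 v x b) / (sa * (sx * sx) * sb)"
    unfolding sin_add c1 c2 using sa sx sb by (simp add: field_simps)
  also have "\<dots> = det3 v a b / (sa * sb)" unfolding I2 sxx[symmetric] using sa sx sb by (simp add: field_simps)
  finally have sn: "sin (t1 + t2) > 0" using d3 sa sb by simp
  have r: "0 < t1" "t1 < pi" "0 < t2" "t2 < pi" using f1 f2 unfolding t1_def t2_def by auto
  have "t1 + t2 < pi"
  proof (rule ccontr)
    assume "\<not> t1 + t2 < pi"
    hence "sin (t1 + t2) \<le> 0" using r by (intro sin_le_zero) auto
    thus False using sn by simp
  qed
  hence "arccos (cos (t1 + t2)) = t1 + t2" using r by (intro arccos_cos) auto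
  thus ?thesis using c3 cs unfolding t1_def t2_def by simp
qed

lemma angle_add_neg:
  assumes hv: "hyp_point v" and ha: "hyp_point a" and hx: "hyp_point x" and hb: "hyp_point b"
    and d1: "det3 v a x < 0" and d2: "det3 v x b < 0" and d3: "det3 v a b < 0"
  shows "hangle v a b = hangle v a x + hangle v x b"
proof -
  have "hangle v b a = hangle v b x + hangle v x a"
    by (rule angle_add[OF hv hb hx ha]) (use d1 d2 d3 det3_swap[of v b x] det3_swap[of v x a] det3_swap[of v b a] in linarith)+
  thus ?thesis using hangle_sym[OF hv hb ha] hangle_sym[OF hv hb hx] hangle_sym[OF hv hx ha] by simp
qed

lemma abs_div_le1: "\<bar>x\<bar> \<le> \<bar>d\<bar> \<Longrightarrow> \<bar>x / (d::real)\<bar> \<le> 1"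
  by (cases "d = 0") (auto simp: abs_divide divide_le_eq_1)

lemma hangle_nonneg:
  assumes "hyp_point v" "hyp_point a" "hyp_point b" shows "hangle v a b \<ge> 0"
proof -
  have "\<bar>Nv v a b / (sqrt (Pv v a) * sqrt (Pv v b))\<bar> \<le> 1"
  proof -
    have sq: "(det3 v a b)^2 = Pv v a * Pv v b - (Nv v a b)^2" by (rule det3_sq'[OF assms])
    have "(Nv v a b)^2 \<le> Pv v a * Pv v b" using sq by (smt (verit) zero_le_power2)
    hence "(Nv v a b)^2 \<le> (sqrt (Pv v a) * sqrt (Pv v b))^2"
      using Pv_nonneg assms by (simp add: power_mult_distrib)
    hence "\<bar>Nv v a b\<bar> \<le> \<bar>sqrt (Pv v a) * sqrt (Pv v b)\<bar>" by (simp only: abs_le_square_iff)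
    thus ?thesis by (rule abs_div_le1)
  qed
  hence "-1 \<le> Nv v a b / (sqrt (Pv v a) * sqrt (Pv v b))" "Nv v a b / (sqrt (Pv v a) * sqrt (Pv v b)) \<le> 1"
    by (simp_all only: abs_le_iff) linarith+
  thus ?thesis using hangle_formula[OF assms] arccos_lbound by simp
qed

lemma tri_setup:
  assumes hA: "hyp_point A" and hB: "hyp_point B" and hC: "hyp_point C" and D: "det3 A B C \<noteq> 0"
  defines "sAB \<equiv> sqrt ((lor A B)^2 - 1)" and "sAC \<equiv> sqrt ((lor A C)^2 - 1)"
    and "sBC \<equiv> sqrt ((lor B C)^2 - 1)"
  shows "sAB > 0" "sAC > 0" "sBC > 0"
    "cos (hangle A B C) = (lor A B * lor A C + lor B C) / (sAB * sAC)"
    "sin (hangle A B C) = \<bar>det3 A B C\<bar> / (sAB * sAC)"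
    "cos (hangle B A C) = (lor A B * lor B C + lor A C) / (sAB * sBC)"
    "sin (hangle B A C) = \<bar>det3 A B C\<bar> / (sAB * sBC)"
    "cos (hangle C A B) = (lor A C * lor B C + lor A B) / (sAC * sBC)"
    "sin (hangle C A B) = \<bar>det3 A B C\<bar> / (sAC * sBC)"
    "(det3 A B C)^2 = ((lor A B)^2 - 1) * ((lor A C)^2 - 1) - (lor A B * lor A C + lor B C)^2"
    "0 < hangle A B C" "hangle A B C < pi" "0 < hangle B A C" "hangle B A C < pi"
    "0 < hangle C A B" "hangle C A B < pi"
proof -
  have dB: "det3 B A C = - det3 A B C" using det3_cyc[of B A C] det3_swap[of A B C] by simp
  have dC: "det3 C A B = det3 A B C" using det3_cyc[of C A B] by simp
  note fA = angle_facts[OF hA hB hC D]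
  note fB = angle_facts[OF hB hA hC, unfolded dB, simplified, OF D]
  note fC = angle_facts[OF hC hA hB, unfolded dC, OF D]
  have pA: "Pv A B = (lor A B)^2 - 1" "Pv A C = (lor A C)^2 - 1" unfolding Pv_def by (simp_all add: lor_sym)
  have pB: "Pv B A = (lor A B)^2 - 1" "Pv B C = (lor B C)^2 - 1" unfolding Pv_def by (simp_all add: lor_sym)
  have pC: "Pv C A = (lor A C)^2 - 1" "Pv C B = (lor B C)^2 - 1" unfolding Pv_def by (simp_all add: lor_sym)
  have nA: "Nv A B C = lor A B * lor A C + lor B C" unfolding Nv_def by (simp add: lor_sym)
  have nB: "Nv B A C = lor A B * lor B C + lor A C" unfolding Nv_def by (simp add: lor_sym)
  have nC: "Nv C A B = lor A C * lor B C + lor A B" unfolding Nv_def by (simp add: lor_sym)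
  show "sAB > 0" "sAC > 0" using fA(1,2) unfolding pA sAB_def sAC_def by auto
  show "sBC > 0" using fB(2) unfolding pB sBC_def by auto
  show "cos (hangle A B C) = (lor A B * lor A C + lor B C) / (sAB * sAC)"
       "sin (hangle A B C) = \<bar>det3 A B C\<bar> / (sAB * sAC)"
    using fA(3,4) unfolding pA nA sAB_def sAC_def by auto
  show "cos (hangle B A C) = (lor A B * lor B C + lor A C) / (sAB * sBC)"
       "sin (hangle B A C) = \<bar>det3 A B C\<bar> / (sAB * sBC)"
    using fB(3,4) unfolding pB nB sAB_def sBC_def by auto
  show "cos (hangle C A B) = (lor A C * lor B C + lor A B) / (sAC * sBC)"
       "sin (hangle C A B) = \<bar>det3 A B C\<bar> / (sAC * sBC)"
    using fC(3,4) unfolding pC nC sAC_def sBC_def by auto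
  show "(det3 A B C)^2 = ((lor A B)^2 - 1) * ((lor A C)^2 - 1) - (lor A B * lor A C + lor B C)^2"
    using det3_sq'[OF hA hB hC] unfolding pA nA .
  show "0 < hangle A B C" "hangle A B C < pi" using fA by auto
  show "0 < hangle B A C" "hangle B A C < pi" using fB by auto
  show "0 < hangle C A B" "hangle C A B < pi" using fC by auto
qed

lemma dual_ident:
  fixes x y z d2 :: real
  assumes "d2 = (z^2 - 1) * (x^2 - 1) - (z * x + y)^2"
  shows "- (z * x + y) * (z * y + x) - z * d2 = (z^2 - 1) * (x * y + z)"
  unfolding assms by algebra

lemma dual_law:
  assumes hA: "hyp_point A" and hB: "hyp_point B" and hC: "hyp_point C" and D: "det3 A B C \<noteq> 0"
  shows "cos (hangle C A B) = - cos (hangle A B C) * cos (hangle B A C)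
           + sin (hangle A B C) * sin (hangle B A C) * (- lor A B)"
proof -
  note f = tri_setup[OF hA hB hC D]
  define sAB where "sAB = sqrt ((lor A B)^2 - 1)"
  define sAC where "sAC = sqrt ((lor A C)^2 - 1)"
  define sBC where "sBC = sqrt ((lor B C)^2 - 1)"
  have p: "sAB > 0" "sAC > 0" "sBC > 0" using f unfolding sAB_def sAC_def sBC_def by auto
  have sq: "sAB * sAB = (lor A B)^2 - 1"
  proof -
    have "(lor A B)^2 - 1 > 0" using p(1) unfolding sAB_def by simp
    thus ?thesis unfolding sAB_def by simp
  qed
  have e: "- (lor A B * lor A C + lor B C) * (lor A B * lor B C + lor A C) - lor A B * (det3 A B C)^2
      = ((lor A B)^2 - 1) * (lor A C * lor B C + lor A B)"
    by (rule dual_ident) (use f(10) in simp)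
  have "- cos (hangle A B C) * cos (hangle B A C) + sin (hangle A B C) * sin (hangle B A C) * (- lor A B)
     = (- (lor A B * lor A C + lor B C) * (lor A B * lor B C + lor A C) - lor A B * (det3 A B C)^2)
        / ((sAB * sAB) * sAC * sBC)"
  proof -
    have c: "cos (hangle A B C) = (lor A B * lor A C + lor B C) / (sAB * sAC)"
       "sin (hangle A B C) = \<bar>det3 A B C\<bar> / (sAB * sAC)"
       "cos (hangle B A C) = (lor A B * lor B C + lor A C) / (sAB * sBC)"
       "sin (hangle B A C) = \<bar>det3 A B C\<bar> / (sAB * sBC)"
      using f(4-7) unfolding sAB_def sAC_def sBC_def by auto
    have aa: "\<bar>det3 A B C\<bar> * \<bar>det3 A B C\<bar> = (det3 A B C)^2" by (simp add: power2_eq_square)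
    show ?thesis unfolding c using p
      by (simp add: field_simps power2_eq_square aa[unfolded power2_eq_square])
  qed
  also have "\<dots> = (lor A C * lor B C + lor A B) / (sAC * sBC)"
    unfolding e sq[symmetric] using p by (simp add: field_simps)
  finally show ?thesis using f(8) unfolding sAC_def sBC_def by simp
qed

lemma sin_ge_half_bound:
  assumes "0 < k" "k \<le> pi/2" "k/2 \<le> w" "w \<le> 3*pi/4"
  shows "sin (k/2) \<le> sin w"
proof (cases "w \<le> pi/2")
  case True
  thus ?thesis using assms by (subst sin_mono_le_eq) auto
next
  case False
  have "sin (k/2) \<le> sin (pi - w)" using assms False by (subst sin_mono_le_eq) auto
  thus ?thesis by simp
qed

lemma tri_T:
  assumes hA: "hyp_point A" and hB: "hyp_point B" and hC: "hyp_point C" and D: "det3 A B C \<noteq> 0"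
    and k: "0 < k" "k \<le> pi/2"
    and sum: "hangle A B C + hangle B A C \<le> pi - k" and g: "hangle C A B \<le> pi/2"
  shows "hangle C A B < pi - hangle A B C - hangle B A C"
    "2 * sin (k/2) * sin ((pi - hangle A B C - hangle B A C - hangle C A B)/2) \<le> - lor A B - 1"
    "sqrt ((lor A C)^2 - 1) * sin (hangle C A B) \<le> sqrt ((lor A B)^2 - 1)"
    "sqrt ((lor B C)^2 - 1) * sin (hangle C A B) \<le> sqrt ((lor A B)^2 - 1)"
proof -
  note f = tri_setup[OF hA hB hC D]
  define a where "a = hangle A B C"
  define b where "b = hangle B A C"
  define c where "c = hangle C A B"
  define u where "u = pi - a - b"
  have ab: "0 < a" "a < pi" "0 < b" "b < pi" "0 < c" "c < pi" using f unfolding a_def b_def c_def by auto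
  have sa: "sin a > 0" "sin b > 0" using ab by (auto intro: sin_gt_zero)
  have sa1: "sin a \<le> 1" "sin b \<le> 1" by auto
  have dl: "cos c = - cos a * cos b + sin a * sin b * (- lor A B)"
    using dual_law[OF hA hB hC D] unfolding a_def b_def c_def .
  have l1: "lor A B \<le> -1" by (rule hyp_lor[OF hA hB])
  have "(lor A B)^2 - 1 > 0" using f(1) by simp
  hence l2: "lor A B < -1"
  proof -
    assume h: "(lor A B)^2 - 1 > 0"
    show ?thesis
    proof (rule ccontr)
      assume "\<not> lor A B < -1"
      hence "lor A B = -1" using l1 by simp
      thus False using h by simp
    qed
  qed
  have cu: "cos u = - cos (a + b)"
  proof -
    have "u = pi - (a + b)" unfolding u_def by simp
    thus ?thesis by simp
  qed
  have key: "cos c - cos u = sin a * sin b * (- lor A B - 1)"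
    using dl cu by (simp add: cos_add algebra_simps)
  have pos: "sin a * sin b * (- lor A B - 1) > 0" using sa l2 by simp
  have u: "k \<le> u" "u < pi" using sum ab unfolding u_def a_def[symmetric] b_def[symmetric] by auto
  have "cos u < cos c" using key pos by simp
  hence cu_lt: "c < u" using ab u k by (subst (asm) cos_mono_less_eq) auto
  thus "hangle C A B < pi - hangle A B C - hangle B A C" unfolding u_def a_def b_def c_def .
  have cd: "cos c - cos u = 2 * sin ((c + u)/2) * sin ((u - c)/2)" by (rule cos_diff_cos)
  have w: "sin (k/2) \<le> sin ((c + u)/2)"
    by (rule sin_ge_half_bound) (use k u ab g c_def in auto)
  have s2: "sin ((u - c)/2) \<ge> 0" using cu_lt u ab by (intro sin_ge_zero) auto
  have "2 * sin (k/2) * sin ((u - c)/2) \<le> 2 * sin ((c + u)/2) * sin ((u - c)/2)"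
    using w s2 by (simp add: mult_right_mono)
  also have "\<dots> = sin a * sin b * (- lor A B - 1)" using cd key by simp
  also have "\<dots> \<le> 1 * 1 * (- lor A B - 1)"
    using sa sa1 l2 by (intro mult_right_mono mult_mono) auto
  finally show "2 * sin (k/2) * sin ((pi - hangle A B C - hangle B A C - hangle C A B)/2) \<le> - lor A B - 1"
    unfolding u_def a_def b_def c_def by (simp add: algebra_simps)
  define sAB where "sAB = sqrt ((lor A B)^2 - 1)"
  define sAC where "sAC = sqrt ((lor A C)^2 - 1)"
  define sBC where "sBC = sqrt ((lor B C)^2 - 1)"
  have p: "sAB > 0" "sAC > 0" "sBC > 0" using f unfolding sAB_def sAC_def sBC_def by auto
  have h1: "sAB * sin b * sBC = \<bar>det3 A B C\<bar>" "sAC * sin c * sBC = \<bar>det3 A B C\<bar>"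
    "sBC * sin c * sAC = \<bar>det3 A B C\<bar>" "sAB * sin a * sAC = \<bar>det3 A B C\<bar>"
    using f(5,7,9) p unfolding sAB_def[symmetric] sAC_def[symmetric] sBC_def[symmetric] a_def b_def c_def
    by (simp_all add: field_simps)
  have "sAC * sin c = sAB * sin b"
    using h1(1,2) p(3) by (metis mult_right_cancel less_irrefl)
  also have "\<dots> \<le> sAB" using sa1 p by (simp add: mult_left_le)
  finally show "sqrt ((lor A C)^2 - 1) * sin (hangle C A B) \<le> sqrt ((lor A B)^2 - 1)"
    unfolding sAC_def sAB_def c_def .
  have "sBC * sin c = sAB * sin a"
    using h1(3,4) p(2) by (metis mult_right_cancel less_irrefl)
  also have "\<dots> \<le> sAB" using sa1 p by (simp add: mult_left_le)
  finally show "sqrt ((lor B C)^2 - 1) * sin (hangle C A B) \<le> sqrt ((lor A B)^2 - 1)"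
    unfolding sBC_def sAB_def c_def .
qed

lemma defl:
  assumes "0 < s" "s * sin (d/2) \<le> s * sin (t/2)" "0 \<le> d" "d \<le> pi" "0 \<le> t" "t \<le> pi"
  shows "d \<le> t"
proof -
  have "sin (d/2) \<le> sin (t/2)" using assms(1,2) by simp
  hence "d/2 \<le> t/2" using assms(3-6) by (subst (asm) sin_mono_le_eq) auto
  thus ?thesis by simp
qed

definition s12 :: real where "s12 = sin (pi/12)"
definition Kq :: real where "Kq = 2 * s12 * sin (pi/26)"
definition epsQ :: real where "epsQ = min 1 (Kq * s12^2 / 3)"

lemma s12_pos: "s12 > 0" unfolding s12_def by (rule sin_gt_zero) auto
lemma s12_le1: "s12 \<le> 1" unfolding s12_def by simp
lemma Kq_pos: "Kq > 0" unfolding Kq_def using s12_pos by (simp add: sin_gt_zero)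
lemma epsQ_pos: "epsQ > 0" unfolding epsQ_def using Kq_pos s12_pos by simp
lemma epsQ_le: "epsQ \<le> 1" "epsQ \<le> Kq * s12^2 / 3" unfolding epsQ_def by auto
lemma epsQ_le_Kq: "epsQ \<le> Kq"
proof -
  have "s12^2 \<le> 1" using s12_pos s12_le1 by (simp add: power_le_one)
  hence "Kq * s12^2 / 3 \<le> Kq" using Kq_pos by (simp add: mult_left_le)
  thus ?thesis using epsQ_le by simp
qed

lemma quad_Q:
  assumes hA: "hyp_point A" and hB: "hyp_point B" and hC: "hyp_point C" and hD: "hyp_point D"
    and d1: "det3 A B C > 0" and d2: "det3 A B D > 0" and d3: "det3 C D A > 0" and d4: "det3 B C D > 0"
    and s: "hangle B A C + hangle C B D \<le> 5*pi/6"
    and qa: "hangle A B D \<le> pi/2" and qd: "hangle D C A \<le> pi/2"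
    and e: "- lor B C \<le> 1 + epsQ"
  shows "hangle A B D + hangle B A C + hangle C B D + hangle D C A > 11*pi/6"
proof -
  define qB where "qB = hangle B A C"
  define A1 where "A1 = hangle A B C"
  define A2 where "A2 = hangle A C D"
  define C1 where "C1 = hangle C B A"
  define C2 where "C2 = hangle C A D"
  have dACD: "det3 A C D > 0" using d3 det3_cyc[of A C D] by simp
  have addA: "hangle A B D = A1 + A2" unfolding A1_def A2_def
    by (rule angle_add[OF hA hB hC hD d1 dACD d2])
  have addC: "hangle C B D = C1 + C2" unfolding C1_def C2_def
  proof (rule angle_add_neg[OF hC hB hA hD])
    show "det3 C B A < 0" using d1 det3_swap[of C A B] det3_cyc[of C A B] by simp
    show "det3 C A D < 0" using d3 det3_swap[of C D A] by simp
    show "det3 C B D < 0" using d4 det3_swap[of C D B] det3_cyc[of B C D] by simp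
  qed
  have nn: "A1 \<ge> 0" "A2 \<ge> 0" "C1 \<ge> 0" "C2 \<ge> 0"
    unfolding A1_def A2_def C1_def C2_def using hA hB hC hD by (auto intro: hangle_nonneg)
  have k: "(0::real) < pi/6" "pi/6 \<le> pi/2" by auto
  have dBCA: "det3 B C A \<noteq> 0" using d1 det3_cyc[of A B C] by simp
  have symB: "hangle B C A = qB" unfolding qB_def by (rule hangle_sym[OF hB hC hA])
  note T1 = tri_T[OF hB hC hA dBCA k, unfolded symB, folded C1_def A1_def]
  have T1s: "qB + C1 \<le> pi - pi/6" using s addC nn unfolding qB_def by linarith
  have T1g: "A1 \<le> pi/2" using qa addA nn by linarith
  note T1' = T1[OF T1s T1g]
  define dd1 where "dd1 = pi - qB - C1 - A1"
  have dd1_pos: "0 < dd1" using T1'(1) unfolding dd1_def by simp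
  have qBpos: "qB \<ge> 0" unfolding qB_def using hA hB hC by (auto intro: hangle_nonneg)
  have dd1_le_pi: "dd1 \<le> pi" unfolding dd1_def using qBpos nn by linarith
  have "2 * sin (pi/6/2) * sin (dd1/2) \<le> Kq"
    using T1'(2) e epsQ_le_Kq unfolding dd1_def by linarith
  hence dds: "(2 * s12) * sin (dd1/2) \<le> (2 * s12) * sin ((pi/13)/2)"
    unfolding Kq_def s12_def by (simp add: mult.assoc)
  have dd1_le: "dd1 \<le> pi/13" by (rule defl[OF _ dds]) (use s12_pos dd1_pos dd1_le_pi in auto)
  have A1lo: "pi/12 \<le> A1" using dd1_le T1s pi_gt_zero unfolding dd1_def by linarith
  have "sin (pi/12) \<le> sin A1" using A1lo T1g by (subst sin_mono_le_eq) auto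
  hence sA1: "s12 \<le> sin A1" unfolding s12_def .
  define sAC where "sAC = sqrt ((lor C A)^2 - 1)"
  define sBC where "sBC = sqrt ((lor B C)^2 - 1)"
  have sAC_nn: "sAC \<ge> 0" unfolding sAC_def using Pv_nonneg[OF hA hC] unfolding Pv_def by simp
  have "sAC * s12 \<le> sAC * sin A1" using sA1 sAC_nn by (simp add: mult_left_mono)
  also have "\<dots> \<le> sBC" using T1'(4) unfolding sAC_def sBC_def .
  finally have sAC_le: "sAC * s12 \<le> sBC" .
  have lBC: "lor B C \<le> -1" by (rule hyp_lor[OF hB hC])
  have sBC2: "sBC^2 = (lor B C)^2 - 1" unfolding sBC_def using Pv_nonneg[OF hC hB] unfolding Pv_def by simp
  have "(lor B C)^2 - 1 = (- lor B C - 1) * (- lor B C + 1)" by (simp add: algebra_simps power2_eq_square)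
  also have "\<dots> \<le> epsQ * 3" using e lBC epsQ_le by (intro mult_mono) auto
  finally have sBC2le: "sBC^2 \<le> 3 * epsQ" using sBC2 by simp
  have "(sAC * s12)^2 \<le> sBC^2" using sAC_le sAC_nn s12_pos by (intro power_mono) auto
  hence "sAC^2 * s12^2 \<le> 3 * epsQ" using sBC2le by (simp add: power_mult_distrib)
  also have "\<dots> \<le> Kq * s12^2" using epsQ_le by simp
  finally have sAC2: "sAC^2 \<le> Kq" using s12_pos by simp
  have lAC: "lor A C \<le> -1" by (rule hyp_lor[OF hA hC])
  have x1: "1 \<le> - lor A C" using lAC by simp
  have "- lor A C * 1 \<le> (- lor A C) * (- lor A C)" by (rule mult_left_mono) (use x1 in auto)
  hence "- lor A C - 1 \<le> (lor A C)^2 - 1" by (simp add: power2_eq_square)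
  also have "\<dots> = sAC^2" unfolding sAC_def using Pv_nonneg[OF hA hC] unfolding Pv_def by (simp add: lor_sym)
  finally have ACsmall: "- lor A C - 1 \<le> Kq" using sAC2 by simp
  have dACD': "det3 A C D \<noteq> 0" using dACD by simp
  have symD: "hangle D A C = hangle D C A" by (rule hangle_sym[OF hD hA hC])
  note T2 = tri_T[OF hA hC hD dACD' k, unfolded symD, folded A2_def C2_def]
  have T2s: "A2 + C2 \<le> pi - pi/6"
  proof -
    have "A2 + C2 = hangle A B D + hangle C B D - (A1 + C1)" using addA addC by simp
    also have "\<dots> = hangle A B D + qB + hangle C B D - pi + dd1" unfolding dd1_def by simp
    finally show ?thesis using qa s dd1_le pi_gt_zero unfolding qB_def by linarith
  qed
  note T2' = T2[OF T2s qd]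
  define dd2 where "dd2 = pi - A2 - C2 - hangle D C A"
  have dd2_pos: "0 < dd2" using T2'(1) unfolding dd2_def by simp
  have qDpos: "hangle D C A \<ge> 0" using hD hC hA by (auto intro: hangle_nonneg)
  have dd2_le_pi: "dd2 \<le> pi" unfolding dd2_def using qDpos nn by linarith
  have "2 * sin (pi/6/2) * sin (dd2/2) \<le> Kq"
    using T2'(2) ACsmall unfolding dd2_def by linarith
  hence dds: "(2 * s12) * sin (dd2/2) \<le> (2 * s12) * sin ((pi/13)/2)"
    unfolding Kq_def s12_def by (simp add: mult.assoc)
  have dd2_le: "dd2 \<le> pi/13" by (rule defl[OF _ dds]) (use s12_pos dd2_pos dd2_le_pi in auto)
  have "hangle A B D + hangle B A C + hangle C B D + hangle D C A = 2 * pi - dd1 - dd2"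
    unfolding addA addC dd1_def dd2_def qB_def by simp
  thus ?thesis using dd1_le dd2_le pi_gt_zero by linarith
qed



definition V :: "pt list \<Rightarrow> nat \<Rightarrow> pt" where "V vs k = vs ! (k mod length vs)"
definition ang :: "pt list \<Rightarrow> nat \<Rightarrow> real" where
  "ang vs k = hangle (V vs k) (V vs (k + (length vs - 1))) (V vs (k + 1))"

lemma mod_inj:
  assumes h: "(k + a) mod n = (k + b) mod (n::nat)" and "a < n" "b < n" shows "a = b"
proof (cases "a \<le> b")
  case True
  have "n dvd (k + b) - (k + a)" using h True by (subst mod_eq_dvd_iff_nat[symmetric]) auto
  hence "n dvd b - a" by simp
  moreover have "b - a < n" using assms by simp
  ultimately have "b - a = 0" by (metis dvd_imp_le le_antisym linorder_not_le zero_less_iff_neq_zero)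
  thus ?thesis using True by simp
next
  case False
  have "n dvd (k + a) - (k + b)" using h False by (subst mod_eq_dvd_iff_nat[symmetric]) auto
  hence "n dvd a - b" by simp
  moreover have "a - b < n" using assms by simp
  ultimately have "a - b = 0" by (metis dvd_imp_le le_antisym linorder_not_le zero_less_iff_neq_zero)
  thus ?thesis using False by simp
qed

lemma V_eq: "a mod length vs = b mod length vs \<Longrightarrow> V vs a = V vs b"
  by (simp add: V_def)

lemma V_add_n: "V vs (k + length vs) = V vs k"
  by (simp add: V_def)

lemma cox_n: "coxeter_polygon vs \<Longrightarrow> length vs \<ge> 3"
  unfolding coxeter_polygon_def convex_hpolygon_def by simp

lemma cox_hyp: assumes "coxeter_polygon vs" shows "hyp_point (V vs k)"
proof -
  have n: "length vs > 0" using cox_n[OF assms] by linarith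
  have "vs \<noteq> []" using n by (cases vs) auto
  hence "vs ! (k mod length vs) \<in> set vs" by simp
  thus ?thesis using assms unfolding coxeter_polygon_def convex_hpolygon_def V_def by blast
qed

lemma cox_conv:
  assumes "coxeter_polygon vs" "2 \<le> a" "a < length vs"
  shows "det3 (V vs k) (V vs (k+1)) (V vs (k+a)) > 0"
proof -
  define n where "n = length vs"
  have n: "n \<ge> 3" using cox_n[OF assms(1)] n_def by simp
  define i where "i = k mod n"
  define j where "j = (k + a) mod n"
  have i: "i < n" and j: "j < n" using n unfolding i_def j_def by auto
  have "j \<noteq> i"
  proof
    assume "j = i"
    hence "(k + a) mod n = (k + 0) mod n" unfolding i_def j_def by simp
    hence "a = 0" by (rule mod_inj) (use assms n_def in auto)
    thus False using assms by simp
  qed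
  moreover have nx: "nxt n i = (k + 1) mod n" unfolding nxt_def i_def by (rule mod_add_left_eq)
  moreover have "j \<noteq> nxt n i"
  proof
    assume "j = nxt n i"
    hence "(k + a) mod n = (k + 1) mod n" unfolding nx j_def by simp
    hence "a = 1" by (rule mod_inj) (use assms n_def n in auto)
    thus False using assms by simp
  qed
  ultimately have "det3 (vs ! i) (vs ! nxt n i) (vs ! j) > 0"
    using assms(1) i j unfolding coxeter_polygon_def convex_hpolygon_def n_def by blast
  thus ?thesis using nx unfolding V_def i_def j_def n_def by simp
qed

lemma cox_ang:
  assumes "coxeter_polygon vs"
  shows "\<exists>m::nat. m \<ge> 2 \<and> ang vs k = pi / real m"
proof -
  define n where "n = length vs"
  have n: "n \<ge> 3" using cox_n[OF assms(1)] n_def by simp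
  define i where "i = k mod n"
  have i: "i < n" using n unfolding i_def by auto
  have nx: "nxt n i = (k + 1) mod n" unfolding nxt_def i_def by (rule mod_add_left_eq)
  have pv: "prv n i = (k + (n - 1)) mod n"
  proof -
    have "i + n - 1 = i + (n - 1)" using n by simp
    hence "prv n i = (k mod n + (n - 1)) mod n" unfolding prv_def i_def by simp
    thus ?thesis by (metis mod_add_left_eq)
  qed
  have "vangle vs i = ang vs k" unfolding vangle_def ang_def V_def n_def[symmetric]
    using nx pv unfolding i_def by simp
  thus ?thesis using assms i unfolding coxeter_polygon_def n_def by metis
qed

lemma cox_ang_le: "coxeter_polygon vs \<Longrightarrow> ang vs k \<le> pi/2"
proof -
  assume "coxeter_polygon vs"
  then obtain m :: nat where m: "m \<ge> 2" "ang vs k = pi / real m" using cox_ang by blast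
  have "pi / real m \<le> pi / 2" using m(1) by (intro divide_left_mono) auto
  thus ?thesis using m by simp
qed

lemma cox_ang_cases: "coxeter_polygon vs \<Longrightarrow> ang vs k = pi/2 \<or> ang vs k \<le> pi/3"
proof -
  assume "coxeter_polygon vs"
  then obtain m :: nat where m: "m \<ge> 2" "ang vs k = pi / real m" using cox_ang by blast
  show ?thesis
  proof (cases "m = 2")
    case True thus ?thesis using m by simp
  next
    case False
    hence "m \<ge> 3" using m by simp
    hence "pi / real m \<le> pi / 3" by (intro divide_left_mono) auto
    thus ?thesis using m by simp
  qed
qed

lemma cox_ang_pos: "coxeter_polygon vs \<Longrightarrow> ang vs k > 0"
proof -
  assume "coxeter_polygon vs"
  then obtain m :: nat where m: "m \<ge> 2" "ang vs k = pi / real m" using cox_ang by blast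
  thus ?thesis by simp
qed

lemma V_shift: "a = b + length vs \<Longrightarrow> V vs a = V vs b"
  by (simp add: V_def)

lemma split_at:
  assumes cp: "coxeter_polygon vs" and a: "2 \<le> a" "a + 2 \<le> length vs"
  shows "ang vs m = hangle (V vs m) (V vs (m + (length vs - 1))) (V vs (m + a))
                   + hangle (V vs m) (V vs (m + a)) (V vs (m + 1))"
proof -
  define n where "n = length vs"
  have n: "n \<ge> 3" using cox_n[OF cp] n_def by simp
  have h: "\<And>k. hyp_point (V vs k)" by (rule cox_hyp[OF cp])
  have c1: "det3 (V vs (m + (n - 1))) (V vs (m + (n - 1) + 1)) (V vs (m + (n - 1) + (a + 1))) > 0"
    by (rule cox_conv[OF cp]) (use a n_def in auto)
  have e1: "V vs (m + (n - 1) + 1) = V vs m" by (rule V_shift) (use n n_def in auto)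
  have e2: "V vs (m + (n - 1) + (a + 1)) = V vs (m + a)" by (rule V_shift) (use n n_def in auto)
  have c1': "det3 (V vs m) (V vs (m + (n - 1))) (V vs (m + a)) < 0"
    using c1 unfolding e1 e2 using det3_cyc[of "V vs (m + (n - 1))" "V vs m" "V vs (m + a)"]
      det3_swap[of "V vs m" "V vs (m + (n - 1))" "V vs (m + a)"] by simp
  have c2: "det3 (V vs m) (V vs (m + 1)) (V vs (m + a)) > 0"
    by (rule cox_conv[OF cp]) (use a n_def in auto)
  have c2': "det3 (V vs m) (V vs (m + a)) (V vs (m + 1)) < 0"
    using c2 det3_swap[of "V vs m" "V vs (m + a)" "V vs (m + 1)"] by simp
  have c3: "det3 (V vs m) (V vs (m + 1)) (V vs (m + (n - 1))) > 0"
    by (rule cox_conv[OF cp]) (use n n_def in auto)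
  have c3': "det3 (V vs m) (V vs (m + (n - 1))) (V vs (m + 1)) < 0"
    using c3 det3_swap[of "V vs m" "V vs (m + (n - 1))" "V vs (m + 1)"] by simp
  show ?thesis unfolding ang_def n_def[symmetric]
    by (rule angle_add_neg[OF h h h h c1' c2' c3'])
qed

lemma side_quad:
  assumes cp: "coxeter_polygon vs" and k: "3 \<le> k" "k + 2 \<le> length vs"
    and s: "hangle (V vs i) (V vs (i+1)) (V vs (i+k)) + hangle (V vs (i+k)) (V vs (i+(k-1))) (V vs i) \<le> 5*pi/6"
    and e: "- lor (V vs i) (V vs (i+k)) \<le> 1 + epsQ"
  shows False
proof -
  define n where "n = length vs"
  have n: "n \<ge> 3" using cox_n[OF cp] n_def by simp
  have h: "\<And>k. hyp_point (V vs k)" by (rule cox_hyp[OF cp])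
  define m where "m = i + (k - 1)"
  define A where "A = V vs m"
  define B where "B = V vs (i + k)"
  define C where "C = V vs i"
  define D where "D = V vs (i + 1)"
  have eB: "V vs (m + 1) = B" unfolding B_def m_def using k by (simp add: add.assoc)
  have eC: "V vs (m + (n - k + 1)) = C" unfolding C_def m_def by (rule V_shift) (use k n_def in auto)
  have eD: "V vs (m + (n - k + 2)) = D" unfolding D_def m_def by (rule V_shift) (use k n_def in auto)
  have d1: "det3 A B C > 0"
    using cox_conv[OF cp, of "n - k + 1" m] k n_def unfolding eB eC A_def by auto
  have d2: "det3 A B D > 0"
    using cox_conv[OF cp, of "n - k + 2" m] k n_def unfolding eB eD A_def by auto
  have d3: "det3 C D A > 0"
    using cox_conv[OF cp, of "k - 1" i] k n_def unfolding A_def C_def D_def m_def by auto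
  have d4: "det3 B C D > 0"
    using cox_conv[OF cp, of k i] k n_def det3_cyc[of B C D] unfolding B_def C_def D_def by auto
  have sym1: "hangle C B D = hangle (V vs i) (V vs (i+1)) (V vs (i+k))"
    unfolding B_def C_def D_def by (rule hangle_sym[OF h h h])
  have s': "hangle B A C + hangle C B D \<le> 5*pi/6"
    using s unfolding sym1 unfolding A_def B_def C_def m_def by simp
  have qa: "hangle A B D \<le> pi/2"
  proof (cases "k = 3")
    case True
    have "V vs (m + (n - 1)) = D" unfolding D_def m_def by (rule V_shift) (use True n n_def in auto)
    hence "ang vs m = hangle A D B" unfolding ang_def n_def[symmetric] A_def eB by simp
    also have "\<dots> = hangle A B D" unfolding A_def B_def D_def by (rule hangle_sym[OF h h h])
    finally show ?thesis using cox_ang_le[OF cp, of m] by simp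
  next
    case False
    have sp: "ang vs m = hangle (V vs m) (V vs (m + (n - 1))) (V vs (m + (n - k + 2)))
                   + hangle (V vs m) (V vs (m + (n - k + 2))) (V vs (m + 1))"
      unfolding n_def by (rule split_at[OF cp]) (use False k n_def in auto)
    have "hangle (V vs m) (V vs (m + (n - 1))) (V vs (m + (n - k + 2))) \<ge> 0"
      by (rule hangle_nonneg[OF h h h])
    hence "hangle A D B \<le> ang vs m" using sp unfolding eD eB A_def by simp
    also have "\<dots> \<le> pi/2" by (rule cox_ang_le[OF cp])
    finally show ?thesis using hangle_sym[OF h h h, of m "i+1" "i+k"] unfolding A_def B_def D_def by simp
  qed
  have qd: "hangle D C A \<le> pi/2"
  proof (cases "k = 3")
    case True
    have e1: "V vs (i + 1 + (n - 1)) = C" unfolding C_def by (rule V_shift) (use n n_def in auto)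
    have e2: "V vs (i + 1 + 1) = A" unfolding A_def m_def using True by (simp add: add.assoc)
    have "ang vs (i + 1) = hangle D C A" unfolding ang_def n_def[symmetric] e1 e2 D_def ..
    thus ?thesis using cox_ang_le[OF cp, of "i+1"] by simp
  next
    case False
    have sp: "ang vs (i+1) = hangle (V vs (i+1)) (V vs (i + 1 + (n - 1))) (V vs (i + 1 + (k - 2)))
                   + hangle (V vs (i+1)) (V vs (i + 1 + (k - 2))) (V vs (i + 1 + 1))"
      unfolding n_def by (rule split_at[OF cp]) (use False k n_def in auto)
    have e1: "V vs (i + 1 + (n - 1)) = C" unfolding C_def by (rule V_shift) (use n n_def in auto)
    have "i + 1 + (k - 2) = i + (k - 1)" using False k by simp
    hence e2: "V vs (i + 1 + (k - 2)) = A" unfolding A_def m_def by (rule arg_cong)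
    have "hangle (V vs (i+1)) (V vs (i + 1 + (k - 2))) (V vs (i + 1 + 1)) \<ge> 0"
      by (rule hangle_nonneg[OF h h h])
    hence "hangle D C A \<le> ang vs (i+1)" using sp unfolding e1 e2 D_def by simp
    also have "\<dots> \<le> pi/2" by (rule cox_ang_le[OF cp])
    finally show ?thesis .
  qed
  have e': "- lor B C \<le> 1 + epsQ" using e lor_sym unfolding B_def C_def by metis
  have "hangle A B D + hangle B A C + hangle C B D + hangle D C A > 11*pi/6"
  proof -
    have hA: "hyp_point A" and hB: "hyp_point B" and hC: "hyp_point C" and hD: "hyp_point D"
      unfolding A_def B_def C_def D_def by (rule h)+
    show ?thesis by (rule quad_Q[OF hA hB hC hD d1 d2 d3 d4 s' qa qd e'])
  qed
  thus False using s' qa qd by linarith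
qed

lemma side_tri:
  assumes cp: "coxeter_polygon vs" and n4: "4 \<le> length vs"
    and s: "hangle (V vs i) (V vs (i+1)) (V vs (i+2)) + hangle (V vs (i+2)) (V vs (i+1)) (V vs i) \<le> 5*pi/6"
    and e: "- lor (V vs i) (V vs (i+2)) \<le> 1 + epsQ"
  shows "\<exists>d. 0 < d \<and> d \<le> pi/13 \<and> ang vs (i+1) = pi - hangle (V vs i) (V vs (i+1)) (V vs (i+2))
            - hangle (V vs (i+2)) (V vs (i+1)) (V vs i) - d"
proof -
  define n where "n = length vs"
  have h: "\<And>k. hyp_point (V vs k)" by (rule cox_hyp[OF cp])
  define A where "A = V vs i"
  define B where "B = V vs (i+2)"
  define C where "C = V vs (i+1)"
  have c: "det3 A C B > 0" using cox_conv[OF cp, of 2 i] n4 unfolding A_def B_def C_def by auto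
  have D: "det3 A B C \<noteq> 0" using c det3_swap[of A B C] by simp
  have a1: "hangle A B C = hangle (V vs i) (V vs (i+1)) (V vs (i+2))"
    unfolding A_def B_def C_def by (rule hangle_sym[OF h h h])
  have a2: "hangle B A C = hangle (V vs (i+2)) (V vs (i+1)) (V vs i)"
    unfolding A_def B_def C_def by (rule hangle_sym[OF h h h])
  have e1: "V vs (i + 1 + (n - 1)) = A" unfolding A_def by (rule V_shift) (use n4 n_def in auto)
  have a3: "hangle C A B = ang vs (i+1)" unfolding ang_def n_def[symmetric] e1
    unfolding A_def B_def C_def by (simp add: add.assoc)
  have k: "(0::real) < pi/6" "pi/6 \<le> pi/2" by auto
  have hA: "hyp_point A" and hB: "hyp_point B" and hC: "hyp_point C" unfolding A_def B_def C_def by (rule h)+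
  note T = tri_T[OF hA hB hC D k, unfolded a1 a2 a3]
  have T1: "ang vs (i+1) \<le> pi/2" by (rule cox_ang_le[OF cp])
  have s': "hangle (V vs i) (V vs (i+1)) (V vs (i+2)) + hangle (V vs (i+2)) (V vs (i+1)) (V vs i) \<le> pi - pi/6"
    using s by simp
  note T' = T[OF s' T1]
  define d where "d = pi - hangle (V vs i) (V vs (i+1)) (V vs (i+2)) - hangle (V vs (i+2)) (V vs (i+1)) (V vs i) - ang vs (i+1)"
  have dpos: "0 < d" using T'(1) unfolding d_def by simp
  have nn: "hangle (V vs i) (V vs (i+1)) (V vs (i+2)) \<ge> 0" "hangle (V vs (i+2)) (V vs (i+1)) (V vs i) \<ge> 0"
    by (rule hangle_nonneg[OF h h h])+
  have dle: "d \<le> pi" unfolding d_def using nn cox_ang_pos[OF cp, of "i+1"] by linarith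
  have "2 * sin (pi/6/2) * sin (d/2) \<le> Kq"
    using T'(2) e epsQ_le_Kq unfolding d_def A_def B_def by linarith
  hence dds: "(2 * s12) * sin (d/2) \<le> (2 * s12) * sin ((pi/13)/2)"
    unfolding Kq_def s12_def by (simp add: mult.assoc)
  have "d \<le> pi/13" by (rule defl[OF _ dds]) (use s12_pos dpos dle in auto)
  moreover have "ang vs (i+1) = pi - hangle (V vs i) (V vs (i+1)) (V vs (i+2))
            - hangle (V vs (i+2)) (V vs (i+1)) (V vs i) - d" unfolding d_def by simp
  ultimately show ?thesis using dpos by blast
qed

definition sF :: "pt list \<Rightarrow> nat \<Rightarrow> nat \<Rightarrow> real" where
  "sF vs i k = hangle (V vs i) (V vs (i+1)) (V vs (i+k)) + hangle (V vs (i+k)) (V vs (i+(k-1))) (V vs i)"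

lemma angsum:
  assumes cp: "coxeter_polygon vs" and k: "2 \<le> k" "k + 2 \<le> length vs"
  shows "ang vs i + ang vs (i+k) = sF vs i k + sF vs (i+k) (length vs - k)"
proof -
  define n where "n = length vs"
  have h: "\<And>k. hyp_point (V vs k)" by (rule cox_hyp[OF cp])
  have sp1: "ang vs i = hangle (V vs i) (V vs (i + (n - 1))) (V vs (i + k))
                   + hangle (V vs i) (V vs (i + k)) (V vs (i + 1))"
    unfolding n_def by (rule split_at[OF cp k])
  have sp2: "ang vs (i+k) = hangle (V vs (i+k)) (V vs (i + k + (n - 1))) (V vs (i + k + (n - k)))
                   + hangle (V vs (i+k)) (V vs (i + k + (n - k))) (V vs (i + k + 1))"
    unfolding n_def by (rule split_at[OF cp]) (use k n_def in auto)
  have e1: "V vs (i + k + (n - k)) = V vs i" by (rule V_shift) (use k n_def in auto)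
  have e2: "V vs (i + k + (n - 1)) = V vs (i + (k - 1))" by (rule V_shift) (use k n_def in auto)
  have "i + k + (n - k - 1) = i + (n - 1)" using k n_def by simp
  hence e3: "V vs (i + k + (n - k - 1)) = V vs (i + (n - 1))" by (rule arg_cong)
  have "sF vs (i+k) (n - k) = hangle (V vs (i+k)) (V vs (i+k+1)) (V vs i)
          + hangle (V vs i) (V vs (i + (n - 1))) (V vs (i+k))"
    unfolding sF_def e1 e3 ..
  moreover have "sF vs i k = hangle (V vs i) (V vs (i+1)) (V vs (i+k)) + hangle (V vs (i+k)) (V vs (i+(k-1))) (V vs i)"
    unfolding sF_def ..
  moreover have "hangle (V vs i) (V vs (i + k)) (V vs (i + 1)) = hangle (V vs i) (V vs (i+1)) (V vs (i+k))"
    by (rule hangle_sym[OF h h h])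
  moreover have "hangle (V vs (i+k)) (V vs i) (V vs (i + k + 1)) = hangle (V vs (i+k)) (V vs (i+k+1)) (V vs i)"
    by (rule hangle_sym[OF h h h])
  ultimately show ?thesis using sp1 sp2 unfolding e1 e2 n_def[symmetric] by simp
qed

lemma ang_half: "coxeter_polygon vs \<Longrightarrow> ang vs k > pi/3 \<Longrightarrow> ang vs k = pi/2"
  using cox_ang_cases by fastforce

lemma L3:
  assumes cp: "coxeter_polygon vs" and k: "2 \<le> k" "k + 2 \<le> length vs"
    and e: "- lor (V vs i) (V vs (i+k)) \<le> 1 + epsQ" and s: "sF vs i k \<le> pi/2"
  shows False
proof (cases "k = 2")
  case False
  have s': "sF vs i k \<le> 5*pi/6" using s pi_gt_zero by linarith
  show False by (rule side_quad[OF cp, of k i]) (use False k e s' in \<open>auto simp: sF_def\<close>)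
next
  case True
  define n where "n = length vs"
  have h: "\<And>k. hyp_point (V vs k)" by (rule cox_hyp[OF cp])
  have n4: "4 \<le> n" using k True n_def by simp
  have sF2: "sF vs i 2 = hangle (V vs i) (V vs (i+1)) (V vs (i+2)) + hangle (V vs (i+2)) (V vs (i+1)) (V vs i)"
    unfolding sF_def by simp
  obtain dF where dF: "0 < dF" "dF \<le> pi/13"
      "ang vs (i+1) = pi - hangle (V vs i) (V vs (i+1)) (V vs (i+2)) - hangle (V vs (i+2)) (V vs (i+1)) (V vs i) - dF"
  proof -
    have s5: "hangle (V vs i) (V vs (i+1)) (V vs (i+2)) + hangle (V vs (i+2)) (V vs (i+1)) (V vs i) \<le> 5*pi/6"
    proof -
      have "sF vs i 2 \<le> pi/2" using s True by simp
      thus ?thesis unfolding sF2 using pi_gt_zero by linarith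
    qed
    have e2: "- lor (V vs i) (V vs (i+2)) \<le> 1 + epsQ" using e True by simp
    have "\<exists>d. 0 < d \<and> d \<le> pi/13 \<and> ang vs (i+1) = pi - hangle (V vs i) (V vs (i+1)) (V vs (i+2))
            - hangle (V vs (i+2)) (V vs (i+1)) (V vs i) - d"
      by (rule side_tri[OF cp _ s5 e2]) (use n4 n_def in simp)
    thus ?thesis using that by blast
  qed
  have a1: "ang vs (i+1) = pi - sF vs i 2 - dF" using dF(3) unfolding sF2 by simp
  have s2: "sF vs i 2 \<le> pi/2" using s True by simp
  have "ang vs (i+1) > pi/3" using a1 s2 dF(2) pi_gt_zero by linarith
  hence a1': "ang vs (i+1) = pi/2" by (rule ang_half[OF cp])
  have sFv: "sF vs i 2 = pi/2 - dF" using a1 a1' by simp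
  have as: "ang vs i + ang vs (i+2) = sF vs i 2 + sF vs (i+2) (n-2)"
    using angsum[OF cp, of 2 i] n4 n_def by simp
  have sG: "sF vs (i+2) (n-2) \<le> pi/2 + dF"
    using as sFv cox_ang_le[OF cp, of i] cox_ang_le[OF cp, of "i+2"] by linarith
  have eG: "- lor (V vs (i+2)) (V vs (i+2+(n-2))) \<le> 1 + epsQ"
  proof -
    have "V vs (i+2+(n-2)) = V vs i" by (rule V_shift) (use n4 n_def in auto)
    thus ?thesis using e True lor_sym by metis
  qed
  show False
  proof (cases "n - 2 = 2")
    case False
    have s5: "sF vs (i+2) (n-2) \<le> 5*pi/6" using sG dF(2) pi_gt_zero by linarith
    show False
    proof (rule side_quad[OF cp, of "n-2" "i+2"])
      show "3 \<le> n - 2" "n - 2 + 2 \<le> length vs" using False n4 n_def by auto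
      show "hangle (V vs (i + 2)) (V vs (i + 2 + 1)) (V vs (i + 2 + (n - 2))) +
        hangle (V vs (i + 2 + (n - 2))) (V vs (i + 2 + (n - 2 - 1))) (V vs (i + 2)) \<le> 5 * pi / 6"
        using s5 unfolding sF_def .
      show "- lor (V vs (i + 2)) (V vs (i + 2 + (n - 2))) \<le> 1 + epsQ" by (rule eG)
    qed
  next
    case n2: True
    have sG2: "sF vs (i+2) 2 = hangle (V vs (i+2)) (V vs (i+2+1)) (V vs (i+2+2))
          + hangle (V vs (i+2+2)) (V vs (i+2+1)) (V vs (i+2))"
      unfolding sF_def by simp
    have sGn: "sF vs (i+2) 2 \<le> pi/2 + dF" using sG n2 by simp
    have sG': "sF vs (i+2) 2 \<le> 5*pi/6" using sGn dF(2) pi_gt_zero by linarith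
    obtain dG where dG: "0 < dG" "dG \<le> pi/13"
      "ang vs (i+2+1) = pi - hangle (V vs (i+2)) (V vs (i+2+1)) (V vs (i+2+2))
          - hangle (V vs (i+2+2)) (V vs (i+2+1)) (V vs (i+2)) - dG"
    proof -
      have s5: "hangle (V vs (i+2)) (V vs (i+2+1)) (V vs (i+2+2))
          + hangle (V vs (i+2+2)) (V vs (i+2+1)) (V vs (i+2)) \<le> 5*pi/6" using sG' unfolding sG2 .
      have e2: "- lor (V vs (i+2)) (V vs (i+2+2)) \<le> 1 + epsQ" using eG n2 by simp
      have "\<exists>d. 0 < d \<and> d \<le> pi/13 \<and> ang vs (i+2+1) = pi - hangle (V vs (i+2)) (V vs (i+2+1)) (V vs (i+2+2))
          - hangle (V vs (i+2+2)) (V vs (i+2+1)) (V vs (i+2)) - d"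
        by (rule side_tri[OF cp _ s5 e2]) (use n4 n_def in simp)
      thus ?thesis using that by blast
    qed
    have a3: "ang vs (i+2+1) = pi - sF vs (i+2) 2 - dG" using dG(3) unfolding sG2 by simp
    have "ang vs (i+2+1) > pi/3" using a3 sGn dF(2) dG(2) pi_gt_zero by linarith
    hence a3': "ang vs (i+2+1) = pi/2" by (rule ang_half[OF cp])
    have sGv: "sF vs (i+2) 2 = pi/2 - dG" using a3 a3' by simp
    have tot: "ang vs i + ang vs (i+2) = pi - dF - dG" using as sFv sGv n2 by simp
    show False
    proof (cases "ang vs i = pi/2 \<and> ang vs (i+2) = pi/2")
      case True
      thus False using tot dF(1) dG(1) by simp
    next
      case False
      hence "ang vs i \<le> pi/3 \<or> ang vs (i+2) \<le> pi/3"
        using cox_ang_cases[OF cp, of i] cox_ang_cases[OF cp, of "i+2"] by auto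
      hence "ang vs i + ang vs (i+2) \<le> 5*pi/6"
        using cox_ang_le[OF cp, of i] cox_ang_le[OF cp, of "i+2"] by auto
      thus False using tot dF(2) dG(2) pi_gt_zero by linarith
    qed
  qed
qed

lemma part3:
  assumes cp: "coxeter_polygon vs" and k: "2 \<le> k" "k + 2 \<le> length vs"
    and e: "- lor (V vs i) (V vs (i+k)) \<le> 1 + epsQ"
  shows False
proof -
  define n where "n = length vs"
  have as: "ang vs i + ang vs (i+k) = sF vs i k + sF vs (i+k) (n - k)"
    unfolding n_def by (rule angsum[OF cp k])
  have "sF vs i k \<le> pi/2 \<or> sF vs (i+k) (n - k) \<le> pi/2"
    using as cox_ang_le[OF cp, of i] cox_ang_le[OF cp, of "i+k"] by linarith
  thus False
  proof
    assume "sF vs i k \<le> pi/2" thus False by (rule L3[OF cp k e])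
  next
    assume s: "sF vs (i+k) (n - k) \<le> pi/2"
    have eG: "- lor (V vs (i+k)) (V vs (i+k+(n-k))) \<le> 1 + epsQ"
    proof -
      have "V vs (i+k+(n-k)) = V vs i" by (rule V_shift) (use k n_def in auto)
      thus ?thesis using e lor_sym by metis
    qed
    show False by (rule L3[OF cp _ _ eG s]) (use k n_def in auto)
  qed
qed

lemma recip_cases:
  fixes a :: nat assumes "a \<ge> 2"
  shows "1 / real a = 1/2 \<or> 1 / real a = 1/3 \<or> 1 / real a = 1/4 \<or> 1 / real a = 1/5 \<or> 1 / real a = 1/6
         \<or> (0 < 1 / real a \<and> 1 / real a \<le> 1/7)"
proof -
  have "a = 2 \<or> a = 3 \<or> a = 4 \<or> a = 5 \<or> a = 6 \<or> 7 \<le> a" using assms by auto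
  moreover have "7 \<le> a \<Longrightarrow> 1 / real a \<le> 1/7" by (simp add: divide_simps)
  moreover have "0 < 1 / real a" using assms by simp
  ultimately show ?thesis by auto
qed

lemma disc_real:
  fixes x y z :: real
  assumes "x = 1/2 \<or> x = 1/3 \<or> x = 1/4 \<or> x = 1/5 \<or> x = 1/6 \<or> (0 < x \<and> x \<le> 1/7)"
    "y = 1/2 \<or> y = 1/3 \<or> y = 1/4 \<or> y = 1/5 \<or> y = 1/6 \<or> (0 < y \<and> y \<le> 1/7)"
    "z = 1/2 \<or> z = 1/3 \<or> z = 1/4 \<or> z = 1/5 \<or> z = 1/6 \<or> (0 < z \<and> z \<le> 1/7)"
    "x + y + z < 1"
  shows "x + y + z \<le> 41/42"
  using assms by (elim disjE conjE) linarith+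

lemma disc3:
  fixes a b c :: nat
  assumes "a \<ge> 2" "b \<ge> 2" "c \<ge> 2" "1/real a + 1/real b + 1/real c < 1"
  shows "1/real a + 1/real b + 1/real c \<le> 41/42"
  by (rule disc_real[OF recip_cases recip_cases recip_cases]) (use assms in auto)

definition epsM :: real where "epsM = min epsQ (2 * s12 * sin (pi/86))"

lemma epsM_pos: "epsM > 0"
  unfolding epsM_def using epsQ_pos s12_pos by (simp add: sin_gt_zero)
lemma epsM_le: "epsM \<le> epsQ" "epsM \<le> 2 * s12 * sin (pi/86)" "epsM \<le> 1"
  unfolding epsM_def using epsQ_le by auto

lemma tri3_angles:
  assumes cp: "coxeter_polygon vs" and n3: "length vs = 3"
  shows "hangle (V vs i) (V vs (i+1)) (V vs (i+2)) = ang vs i"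
    "hangle (V vs (i+1)) (V vs i) (V vs (i+2)) = ang vs (i+1)"
    "hangle (V vs (i+2)) (V vs i) (V vs (i+1)) = ang vs (i+2)"
proof -
  have h: "\<And>k. hyp_point (V vs k)" by (rule cox_hyp[OF cp])
  have "ang vs i = hangle (V vs i) (V vs (i+2)) (V vs (i+1))" unfolding ang_def n3 by simp
  thus "hangle (V vs i) (V vs (i+1)) (V vs (i+2)) = ang vs i" using hangle_sym[OF h h h] by metis
  have e1: "V vs (i + 1 + 2) = V vs i" by (rule V_shift) (use n3 in auto)
  have "ang vs (i+1) = hangle (V vs (i+1)) (V vs (i+1+2)) (V vs (i+1+1))" unfolding ang_def n3 by simp
  thus "hangle (V vs (i+1)) (V vs i) (V vs (i+2)) = ang vs (i+1)" unfolding e1 by (simp add: add.assoc)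
  have e2: "V vs (i + 2 + 2) = V vs (i+1)" by (rule V_shift) (use n3 in auto)
  have e3: "V vs (i + 2 + 1) = V vs i" by (rule V_shift) (use n3 in auto)
  have "ang vs (i+2) = hangle (V vs (i+2)) (V vs (i+2+2)) (V vs (i+2+1))" unfolding ang_def n3 by simp
  also have "\<dots> = hangle (V vs (i+2)) (V vs (i+1)) (V vs i)" unfolding e2 e3 ..
  finally show "hangle (V vs (i+2)) (V vs i) (V vs (i+1)) = ang vs (i+2)" using hangle_sym[OF h h h] by metis
qed

lemma tri_coxeter:
  assumes cp: "coxeter_polygon vs" and n3: "length vs = 3"
    and e: "- lor (V vs i) (V vs (i+1)) \<le> 1 + epsM" and s: "ang vs i + ang vs (i+1) \<le> 5*pi/6"
  shows False
proof -
  have h: "\<And>k. hyp_point (V vs k)" by (rule cox_hyp[OF cp])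
  have D: "det3 (V vs i) (V vs (i+1)) (V vs (i+2)) \<noteq> 0"
    using cox_conv[OF cp, of 2 i] n3 by auto
  have k: "(0::real) < pi/6" "pi/6 \<le> pi/2" by auto
  note ta = tri3_angles[OF cp n3, of i]
  note T = tri_T[OF h h h D k, unfolded ta]
  have s': "ang vs i + ang vs (i+1) \<le> pi - pi/6" using s by simp
  note T' = T[OF s' cox_ang_le[OF cp]]
  define d where "d = pi - ang vs i - ang vs (i+1) - ang vs (i+2)"
  have dpos: "0 < d" using T'(1) unfolding d_def by simp
  have dle: "d \<le> pi" unfolding d_def using cox_ang_pos[OF cp, of i] cox_ang_pos[OF cp, of "i+1"]
      cox_ang_pos[OF cp, of "i+2"] by linarith
  have "2 * sin (pi/6/2) * sin (d/2) \<le> 2 * s12 * sin (pi/86)"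
    using T'(2) e epsM_le unfolding d_def by linarith
  hence dds: "(2 * s12) * sin (d/2) \<le> (2 * s12) * sin ((pi/43)/2)"
    unfolding s12_def by (simp add: mult.assoc)
  have d43: "d \<le> pi/43" by (rule defl[OF _ dds]) (use s12_pos dpos dle in auto)
  obtain a :: nat where a: "a \<ge> 2" "ang vs i = pi / real a" using cox_ang[OF cp] by blast
  obtain b :: nat where b: "b \<ge> 2" "ang vs (i+1) = pi / real b" using cox_ang[OF cp] by blast
  obtain c :: nat where c: "c \<ge> 2" "ang vs (i+2) = pi / real c" using cox_ang[OF cp] by blast
  define X where "X = 1/real a + 1/real b + 1/real c"
  have pX: "pi * X = pi - d" unfolding X_def d_def a b c by (simp add: field_simps)
  have "X < 1"
  proof -
    have "pi * X < pi * 1" using pX dpos by simp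
    thus ?thesis using pi_gt_zero by (simp only: mult_less_cancel_left_pos)
  qed
  hence "X \<le> 41/42" unfolding X_def by (rule disc3[OF a(1) b(1) c(1)])
  moreover have "pi * (41/42) < pi * X" unfolding pX using d43 pi_gt_zero by linarith
  ultimately show False using pi_gt_zero by (simp only: mult_less_cancel_left_pos)
qed

lemma part1:
  assumes cp: "coxeter_polygon vs" and e: "- lor (V vs i) (V vs (i+1)) \<le> 1 + epsM"
  shows "ang vs i = pi/2 \<and> ang vs (i+1) = pi/2"
proof (rule ccontr)
  assume nb: "\<not> (ang vs i = pi/2 \<and> ang vs (i+1) = pi/2)"
  hence "ang vs i \<le> pi/3 \<or> ang vs (i+1) \<le> pi/3"
    using cox_ang_cases[OF cp, of i] cox_ang_cases[OF cp, of "i+1"] by auto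
  hence s: "ang vs i + ang vs (i+1) \<le> 5*pi/6"
    using cox_ang_le[OF cp, of i] cox_ang_le[OF cp, of "i+1"] by auto
  define n where "n = length vs"
  have n3: "n \<ge> 3" using cox_n[OF cp] n_def by simp
  have h: "\<And>k. hyp_point (V vs k)" by (rule cox_hyp[OF cp])
  show False
  proof (cases "n = 3")
    case True thus False using tri_coxeter[OF cp _ e s] n_def by simp
  next
    case False
    hence n4: "n \<ge> 4" using n3 by simp
    define m where "m = i + (n - 1)"
    define A where "A = V vs m"
    define B where "B = V vs i"
    define C where "C = V vs (i+1)"
    define D where "D = V vs (i+2)"
    have hA: "hyp_point A" and hB: "hyp_point B" and hC: "hyp_point C" and hD: "hyp_point D"
      unfolding A_def B_def C_def D_def by (rule h)+
    have eB: "V vs (m + 1) = B" unfolding B_def m_def by (rule V_shift) (use n4 n_def in auto)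
    have eC: "V vs (m + 2) = C" unfolding C_def m_def by (rule V_shift) (use n4 n_def in auto)
    have eD: "V vs (m + 3) = D" unfolding D_def m_def by (rule V_shift) (use n4 n_def in auto)
    have d1: "det3 A B C > 0" using cox_conv[OF cp, of 2 m] n4 n_def unfolding eB eC A_def by auto
    have d2: "det3 A B D > 0" using cox_conv[OF cp, of 3 m] n4 n_def unfolding eB eD A_def by auto
    have "i + 1 + (n - 2) = m" unfolding m_def using n4 by simp
    hence eA: "V vs (i + 1 + (n - 2)) = A" unfolding A_def by simp
    have d3: "det3 C D A > 0" using cox_conv[OF cp, of "n-2" "i+1"] n4 n_def unfolding eA C_def D_def
      by (auto simp: add.assoc)
    have d4: "det3 B C D > 0" using cox_conv[OF cp, of 2 i] n4 n_def unfolding B_def C_def D_def by auto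
    have angi: "ang vs i = hangle B A C" unfolding ang_def A_def B_def C_def m_def n_def ..
    have e1: "V vs (i + 1 + (n - 1)) = B" unfolding B_def by (rule V_shift) (use n4 n_def in auto)
    have angi1: "ang vs (i+1) = hangle C B D" unfolding ang_def n_def[symmetric] e1 C_def D_def
      by (simp add: add.assoc)
    have s': "hangle B A C + hangle C B D \<le> 5*pi/6" using s angi angi1 by simp
    have qa: "hangle A B D \<le> pi/2"
    proof (cases "n = 4")
      case True
      have "V vs (m + (n - 1)) = D" unfolding D_def m_def by (rule V_shift) (use True n_def in auto)
      hence "ang vs m = hangle A D B" unfolding ang_def n_def[symmetric] A_def eB by simp
      also have "\<dots> = hangle A B D" by (rule hangle_sym[OF hA hD hB])
      finally show ?thesis using cox_ang_le[OF cp, of m] by simp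
    next
      case False
      have sp: "ang vs m = hangle (V vs m) (V vs (m + (n - 1))) (V vs (m + 3))
                     + hangle (V vs m) (V vs (m + 3)) (V vs (m + 1))"
        unfolding n_def by (rule split_at[OF cp]) (use False n4 n_def in auto)
      have "hangle (V vs m) (V vs (m + (n - 1))) (V vs (m + 3)) \<ge> 0" by (rule hangle_nonneg[OF h h h])
      hence "hangle A D B \<le> ang vs m" using sp unfolding eD eB A_def by simp
      also have "\<dots> \<le> pi/2" by (rule cox_ang_le[OF cp])
      finally show ?thesis using hangle_sym[OF hA hD hB] by simp
    qed
    have qd: "hangle D C A \<le> pi/2"
    proof (cases "n = 4")
      case True
      have f1: "V vs (i + 2 + (n - 1)) = C" unfolding C_def by (rule V_shift) (use True n_def in auto)
      have "i + 2 + 1 = m" unfolding m_def using True by simp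
      hence f2: "V vs (i + 2 + 1) = A" unfolding A_def by simp
      have "ang vs (i+2) = hangle D C A" unfolding ang_def n_def[symmetric] f1 f2 D_def ..
      thus ?thesis using cox_ang_le[OF cp, of "i+2"] by simp
    next
      case False
      have sp: "ang vs (i+2) = hangle (V vs (i+2)) (V vs (i + 2 + (n - 1))) (V vs (i + 2 + (n - 3)))
                     + hangle (V vs (i+2)) (V vs (i + 2 + (n - 3))) (V vs (i + 2 + 1))"
        unfolding n_def by (rule split_at[OF cp]) (use False n4 n_def in auto)
      have f1: "V vs (i + 2 + (n - 1)) = C" unfolding C_def by (rule V_shift) (use n4 n_def in auto)
      have "i + 2 + (n - 3) = m" unfolding m_def using n4 by simp
      hence f2: "V vs (i + 2 + (n - 3)) = A" unfolding A_def by simp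
      have "hangle (V vs (i+2)) (V vs (i + 2 + (n - 3))) (V vs (i + 2 + 1)) \<ge> 0" by (rule hangle_nonneg[OF h h h])
      hence "hangle D C A \<le> ang vs (i+2)" using sp unfolding f1 f2 D_def by simp
      also have "\<dots> \<le> pi/2" by (rule cox_ang_le[OF cp])
      finally show ?thesis .
    qed
    have e': "- lor B C \<le> 1 + epsQ" using e epsM_le unfolding B_def C_def by linarith
    have "hangle A B D + hangle B A C + hangle C B D + hangle D C A > 11*pi/6"
      by (rule quad_Q[OF hA hB hC hD d1 d2 d3 d4 s' qa qd e'])
    thus False using s' qa qd by linarith
  qed
qed

lemma tri_ineq:
  assumes ha: "hyp_point a" and hb: "hyp_point b" and hc: "hyp_point c" and t: "t \<ge> 0"
    and e1: "- lor a b \<le> 1 + t" and e2: "- lor b c \<le> 1 + t"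
  shows "- lor a c \<le> 1 + 4*t + 2*t^2"
proof -
  define x where "x = - lor a b"
  define y where "y = - lor b c"
  define w where "w = (1 + t)^2 - 1"
  have x1: "1 \<le> x" unfolding x_def using hyp_lor[OF ha hb] by simp
  have y1: "1 \<le> y" unfolding y_def using hyp_lor[OF hb hc] by simp
  have "1 * 1 \<le> (1 + t) * (1 + t)" by (rule mult_mono) (use t in auto)
  hence w0: "w \<ge> 0" unfolding w_def by (simp add: power2_eq_square)
  have pa: "Pv b a = x^2 - 1" unfolding Pv_def x_def by (simp add: power2_eq_square)
  have pc: "Pv b c = y^2 - 1" unfolding Pv_def y_def by (simp add: power2_eq_square lor_sym)
  have "x^2 \<le> (1+t)^2" using x1 e1 unfolding x_def by (intro power_mono) auto
  hence pa': "Pv b a \<le> w" unfolding pa w_def by simp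
  have "y^2 \<le> (1+t)^2" using y1 e2 unfolding y_def by (intro power_mono) auto
  hence pc': "Pv b c \<le> w" unfolding pc w_def by simp
  have sq: "(det3 b a c)^2 = Pv b a * Pv b c - (Nv b a c)^2" by (rule det3_sq'[OF hb ha hc])
  have "(Nv b a c)^2 \<le> Pv b a * Pv b c" using sq by (smt (verit) zero_le_power2)
  also have "\<dots> \<le> w * w" using pa' pc' Pv_nonneg[OF hb ha] Pv_nonneg[OF hb hc] w0
    by (intro mult_mono) auto
  finally have "(Nv b a c)^2 \<le> w^2" by (simp add: power2_eq_square)
  hence "\<bar>Nv b a c\<bar> \<le> \<bar>w\<bar>" by (simp only: abs_le_square_iff)
  hence nv: "- Nv b a c \<le> w" using w0 by simp
  have nvd: "Nv b a c = x * y + lor a c" unfolding Nv_def x_def y_def by (simp add: lor_sym)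
  have "x * y \<le> (1 + t) * (1 + t)" using x1 y1 e1 e2 unfolding x_def y_def by (intro mult_mono) auto
  hence "- lor a c \<le> (1 + t) * (1 + t) + w" using nv nvd by linarith
  thus ?thesis unfolding w_def by (simp add: power2_eq_square algebra_simps)
qed

lemma part2:
  assumes cp: "coxeter_polygon vs"
    and e1: "- lor (V vs i) (V vs (i+1)) \<le> 1 + epsM/8"
    and e2: "- lor (V vs (i+1)) (V vs (i+2)) \<le> 1 + epsM/8"
  shows False
proof -
  define n where "n = length vs"
  have n3: "n \<ge> 3" using cox_n[OF cp] n_def by simp
  have h: "\<And>k. hyp_point (V vs k)" by (rule cox_hyp[OF cp])
  have ep: "epsM > 0" "epsM \<le> 1" using epsM_pos epsM_le by auto
  show False
  proof (cases "n = 3")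
    case True
    have p1: "ang vs i = pi/2 \<and> ang vs (i+1) = pi/2" by (rule part1[OF cp]) (use e1 ep in simp)
    have p2: "ang vs (i+1) = pi/2 \<and> ang vs (i+1+1) = pi/2" by (rule part1[OF cp]) (use e2 ep in simp)
    note ta = tri3_angles[OF cp, of i] True n_def
    have D: "det3 (V vs i) (V vs (i+1)) (V vs (i+2)) \<noteq> 0" using cox_conv[OF cp, of 2 i] True n_def by auto
    note dl = dual_law[OF h h h D]
    have a3: "hangle (V vs (i+2)) (V vs i) (V vs (i+1)) = pi/2" using ta p2 by simp
    have a1: "hangle (V vs i) (V vs (i+1)) (V vs (i+2)) = pi/2" using ta p1 by simp
    have a2: "hangle (V vs (i+1)) (V vs i) (V vs (i+2)) = pi/2" using ta p1 by simp
    have "cos (pi/2) = - cos (pi/2) * cos (pi/2) + sin (pi/2) * sin (pi/2) * (- lor (V vs i) (V vs (i+1)))"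
      using dl unfolding a1 a2 a3 .
    hence "lor (V vs i) (V vs (i+1)) = 0" by simp
    thus False using hyp_lor[OF h h, of i "i+1"] by simp
  next
    case False
    hence n4: "n \<ge> 4" using n3 by simp
    have t: "epsM/8 \<ge> 0" using ep by simp
    have "- lor (V vs i) (V vs (i+2)) \<le> 1 + 4*(epsM/8) + 2*(epsM/8)^2"
      by (rule tri_ineq[OF h h h t e1]) (use e2 in \<open>simp add: add.assoc\<close>)
    also have "\<dots> \<le> 1 + epsM"
    proof -
      have "epsM^2 \<le> epsM" using ep by (simp add: power2_eq_square mult_left_le)
      hence ee: "epsM * epsM \<le> epsM" by (simp add: power2_eq_square)
      have "1 + 4*(epsM/8) + 2*(epsM/8)^2 = 1 + epsM/2 + (epsM*epsM)/32"
        by (simp add: power2_eq_square)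
      thus ?thesis using ee ep by linarith
    qed
    also have "\<dots> \<le> 1 + epsQ" using epsM_le by simp
    finally have e: "- lor (V vs i) (V vs (i+2)) \<le> 1 + epsQ" .
    show False by (rule part3[OF cp _ _ e]) (use n4 n_def in auto)
  qed
qed



lemma V_nth: "i < length vs \<Longrightarrow> vs ! i = V vs i" by (simp add: V_def)

lemma V_mod_add: "V vs (k mod length vs + c) = V vs (k + c)"
  by (rule V_eq) (simp add: mod_add_left_eq)

lemma V_mod: "V vs (k mod length vs) = V vs k"
  using V_mod_add[of vs k 0] by simp

lemma ang_mod: "ang vs (k mod length vs) = ang vs k"
  unfolding ang_def V_mod_add V_mod ..

lemma vangle_ang:
  assumes cp: "coxeter_polygon vs" and i: "i < length vs"
  shows "vangle vs i = ang vs i"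
proof -
  define n where "n = length vs"
  have n: "n \<ge> 3" using cox_n[OF cp] n_def by simp
  have nx: "nxt n i = (i + 1) mod n" unfolding nxt_def ..
  have pv: "prv n i = (i + (n - 1)) mod n"
  proof -
    have "i + n - 1 = i + (n - 1)" using n by simp
    thus ?thesis unfolding prv_def by simp
  qed
  show ?thesis unfolding vangle_def ang_def n_def[symmetric] nx pv
    using i n_def by (simp add: V_def)
qed

lemma elen_V:
  assumes cp: "coxeter_polygon vs" and i: "i < length vs"
  shows "elen vs i = arcosh (- lor (V vs i) (V vs (i+1)))"
  unfolding elen_def hdist_def nxt_def using i by (simp add: V_def)

lemma arcosh_le_conv:
  fixes c t :: real
  assumes "1 \<le> c" "0 \<le> t" "arcosh c \<le> arcosh (1 + t)" shows "c \<le> 1 + t"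
proof (rule ccontr)
  assume "\<not> c \<le> 1 + t"
  hence a: "1 + t < c" by simp
  have b: "1 \<le> 1 + t" using assms by simp
  have "arcosh (1 + t) < arcosh c" by (rule arcosh_real_strict_mono[OF b a])
  thus False using assms by linarith
qed

lemma arcosh_lt_conv:
  fixes c t :: real
  assumes "1 \<le> c" "0 \<le> t" "arcosh c < arcosh (1 + t)" shows "c < 1 + t"
proof (rule ccontr)
  assume "\<not> c < 1 + t"
  hence le: "1 + t \<le> c" by simp
  have b: "1 \<le> 1 + t" using assms by simp
  have "arcosh (1 + t) \<le> arcosh c"
  proof (cases "c = 1 + t")
    case True thus ?thesis by simp
  next
    case False
    hence "1 + t < c" using le by simp
    thus ?thesis using arcosh_real_strict_mono[OF b] by (simp add: less_imp_le)
  qed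
  thus False using assms by linarith
qed

lemma lor_ge: "coxeter_polygon vs \<Longrightarrow> 1 \<le> - lor (V vs a) (V vs b)"
  using hyp_lor[OF cox_hyp cox_hyp] by fastforce

theorem lemma5:
  shows "\<exists>\<eta>::real. \<eta> > 0 \<and> (\<forall>vs. coxeter_polygon vs \<longrightarrow>
     (\<forall>i<length vs. elen vs i \<le> \<eta> \<longrightarrow>
         vangle vs i = pi / 2 \<and> vangle vs (nxt (length vs) i) = pi / 2) \<and>
     (\<forall>i<length vs. \<not> (elen vs i \<le> \<eta> \<and> elen vs (nxt (length vs) i) \<le> \<eta>)) \<and>
     (\<forall>i<length vs. \<forall>j<length vs. i \<noteq> j \<and> j \<noteq> nxt (length vs) i \<and> i \<noteq> nxt (length vs) j
         \<longrightarrow> hdist (vs ! i) (vs ! j) \<ge> \<eta>))"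
proof -
  define t where "t = epsM / 8"
  have t0: "t > 0" unfolding t_def using epsM_pos by simp
  have tM: "t \<le> epsM" unfolding t_def using epsM_pos by simp
  define \<eta> where "\<eta> = arcosh (1 + t)"
  have "arcosh 1 < arcosh (1 + t)" using t0 by (intro arcosh_real_strict_mono) auto
  hence \<eta>0: "\<eta> > 0" unfolding \<eta>_def by simp
  show ?thesis
  proof (rule exI[of _ \<eta>], rule conjI[OF \<eta>0], intro allI impI)
    fix vs assume cp: "coxeter_polygon vs"
    define n where "n = length vs"
    have n3: "n \<ge> 3" using cox_n[OF cp] n_def by simp
    have short: "- lor (V vs i) (V vs (i+1)) \<le> 1 + t" if "i < n" "elen vs i \<le> \<eta>" for i
    proof (rule arcosh_le_conv)
      show "1 \<le> - lor (V vs i) (V vs (i+1))" by (rule lor_ge[OF cp])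
      show "0 \<le> t" using t0 by simp
      show "arcosh (- lor (V vs i) (V vs (i+1))) \<le> arcosh (1 + t)"
        using that elen_V[OF cp, of i] n_def unfolding \<eta>_def by simp
    qed
    have P1: "\<forall>i<length vs. elen vs i \<le> \<eta> \<longrightarrow>
         vangle vs i = pi / 2 \<and> vangle vs (nxt (length vs) i) = pi / 2"
    proof (intro allI impI)
      fix i assume i: "i < length vs" and el: "elen vs i \<le> \<eta>"
      have "- lor (V vs i) (V vs (i+1)) \<le> 1 + epsM" using short[of i] i el n_def tM by fastforce
      hence p: "ang vs i = pi/2 \<and> ang vs (i+1) = pi/2" by (rule part1[OF cp])
      have "length vs > 0" using n3 n_def by linarith
      hence im: "(i+1) mod length vs < length vs" by simp
      have "vangle vs (nxt (length vs) i) = ang vs (i+1)"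
        using ang_mod[of vs "i+1"] vangle_ang[OF cp im] unfolding nxt_def by simp
      thus "vangle vs i = pi / 2 \<and> vangle vs (nxt (length vs) i) = pi / 2"
        using p vangle_ang[OF cp i] by simp
    qed
    have P2: "\<forall>i<length vs. \<not> (elen vs i \<le> \<eta> \<and> elen vs (nxt (length vs) i) \<le> \<eta>)"
    proof (intro allI impI)
      fix i assume i: "i < length vs"
      show "\<not> (elen vs i \<le> \<eta> \<and> elen vs (nxt (length vs) i) \<le> \<eta>)"
      proof
        assume a: "elen vs i \<le> \<eta> \<and> elen vs (nxt (length vs) i) \<le> \<eta>"
        have e1: "- lor (V vs i) (V vs (i+1)) \<le> 1 + epsM/8" using short[of i] i a n_def t_def by simp
        define i' where "i' = (i+1) mod n"
        have i': "i' < n" unfolding i'_def using n3 by simp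
        have "- lor (V vs i') (V vs (i'+1)) \<le> 1 + t" using short[of i'] i' a n_def i'_def nxt_def by simp
        moreover have "V vs i' = V vs (i+1)" unfolding i'_def n_def by (rule V_mod)
        moreover have "V vs (i'+1) = V vs (i+1+1)" unfolding i'_def n_def by (rule V_mod_add)
        ultimately have e2: "- lor (V vs (i+1)) (V vs (i+2)) \<le> 1 + epsM/8" unfolding t_def by simp
        show False by (rule part2[OF cp e1 e2])
      qed
    qed
    have P3: "\<forall>i<length vs. \<forall>j<length vs. i \<noteq> j \<and> j \<noteq> nxt (length vs) i \<and> i \<noteq> nxt (length vs) j
         \<longrightarrow> hdist (vs ! i) (vs ! j) \<ge> \<eta>"
    proof (intro allI impI)
      fix i j assume i: "i < length vs" and j: "j < length vs"
        and ne: "i \<noteq> j \<and> j \<noteq> nxt (length vs) i \<and> i \<noteq> nxt (length vs) j"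
      show "\<eta> \<le> hdist (vs ! i) (vs ! j)"
      proof (rule ccontr)
        assume "\<not> \<eta> \<le> hdist (vs ! i) (vs ! j)"
        hence lt: "arcosh (- lor (V vs i) (V vs j)) < arcosh (1 + t)"
          unfolding \<eta>_def hdist_def using i j by (simp add: V_def)
        have c: "- lor (V vs i) (V vs j) < 1 + t"
          by (rule arcosh_lt_conv[OF lor_ge[OF cp] _ lt]) (use t0 in simp)
        have cQ: "- lor (V vs i) (V vs j) \<le> 1 + epsQ" using c tM epsM_le by linarith
        show False
        proof (cases "i < j")
          case True
          define k where "k = j - i"
          have jk: "i + k = j" unfolding k_def using True by simp
          have k2: "k \<ge> 2"
          proof (rule ccontr)
            assume "\<not> k \<ge> 2"
            hence "j = i + 1" using True unfolding k_def by simp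
            hence "nxt (length vs) i = j" unfolding nxt_def using j by simp
            thus False using ne by simp
          qed
          have kn: "k + 2 \<le> n"
          proof (rule ccontr)
            assume "\<not> k + 2 \<le> n"
            hence "j + 1 = length vs" "i = 0" using j n_def True n3 unfolding k_def by auto
            hence "nxt (length vs) j = i" unfolding nxt_def by simp
            thus False using ne by simp
          qed
          show False by (rule part3[OF cp k2]) (use kn n_def cQ jk in auto)
        next
          case False
          hence ji: "j < i" using ne by simp
          define k where "k = j + n - i"
          have "V vs (i + k) = V vs j" unfolding k_def by (rule V_shift) (use i n_def in auto)
          hence cQ': "- lor (V vs i) (V vs (i + k)) \<le> 1 + epsQ" using cQ by simp
          have k2: "k \<ge> 2"
          proof (rule ccontr)
            assume "\<not> k \<ge> 2"
            hence "i + 1 = length vs" "j = 0" using ji i n_def n3 unfolding k_def by auto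
            hence "nxt (length vs) i = j" unfolding nxt_def by simp
            thus False using ne by simp
          qed
          have kn: "k + 2 \<le> n"
          proof (rule ccontr)
            assume "\<not> k + 2 \<le> n"
            hence "i = j + 1" using ji i n_def unfolding k_def by auto
            hence "nxt (length vs) j = i" unfolding nxt_def using i by simp
            thus False using ne by simp
          qed
          show False by (rule part3[OF cp k2]) (use kn n_def cQ' in auto)
        qed
      qed
    qed
    show "(\<forall>i<length vs. elen vs i \<le> \<eta> \<longrightarrow>
         vangle vs i = pi / 2 \<and> vangle vs (nxt (length vs) i) = pi / 2) \<and>
     (\<forall>i<length vs. \<not> (elen vs i \<le> \<eta> \<and> elen vs (nxt (length vs) i) \<le> \<eta>)) \<and>
     (\<forall>i<length vs. \<forall>j<length vs. i \<noteq> j \<and> j \<noteq> nxt (length vs) i \<and> i \<noteq> nxt (length vs) j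
         \<longrightarrow> hdist (vs ! i) (vs ! j) \<ge> \<eta>)" using P1 P2 P3 by blast
  qed
qed

end
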